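(* Let $D$ be a finite set and $P:D^2\to\{0,1\}$ a binary predicate such that for any two-element subsets $B,C\subseteq D$, the restriction $P|_{B\times C}$ is not a singleton. Then for every $0<\varepsilon<1$ and every instance $I$ of $\mathrm{CSP}(P)$ on $n$ variables there is an $\varepsilon$-sparsifier of $I$ with $O(\varepsilon^{-2}n)$ constraints, where the implied constant does not depend on $I$, $n$ or $\varepsilon$.
   Context: A binary CSP instance is $I=(V,D,\Pi,w)$ where $V$ is a finite set of $n=|V|$ variables, $D$ a finite domain, $\Pi$ a set of constraints, each a pair $\langle (u,v),P\rangle$ with $u,v\in V$ distinct and $P:D^2\to\{0,1\}$, and $w:\Pi\to\mathbb{R}_{>0}$ positive weights. $\mathrm{CSP}(P)$ is the class of instances in which every constraint uses the predicate $P$. For an assignment $A:V\to D$, $\mathrm{Val}_I(A)=\sum_{\pi=\langle(u,v),P\rangle\in\Pi} w(\pi)P(A(u),A(v))$. For $0<\varepsilon<1$, an $\varepsilon$-sparsifier of $I$ is an instance $I_\varepsilon=(V,D,\Pi_\varepsilon,w_\varepsilon)$ with $\Pi_\varepsilon\subseteq\Pi$ and $w_\varepsilon:\Pi_\varepsilon\to\mathbb{R}_{>0}$ such that for every $A:V\to D$, $(1-\varepsilon)\mathrm{Val}_I(A)\le \mathrm{Val}_{I_\varepsilon}(A)\le(1+\varepsilon)\mathrm{Val}_I(A)$; its number of constraints is $|\Pi_\varepsilon|$. A predicate is a singleton if exactly one tuple is mapped to $1$. $P|_{B\times C}$ denotes the restriction of $P$ to $B\times C$. *)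

theory Defs
  imports Main "HOL.Real"
begin

text \<open>A binary CSP(P) instance: variable set V, a set of constraints Pi, each constraint
  being an ordered pair (u,v) of distinct variables (all using the predicate P),
  and positive weights w.\<close>

definition csp_instance :: "'v set \<Rightarrow> ('v \<times> 'v) set \<Rightarrow> (('v \<times> 'v) \<Rightarrow> real) \<Rightarrow> bool" where
  "csp_instance V Pi w \<longleftrightarrow> finite V \<and> Pi \<subseteq> V \<times> V \<and>
     (\<forall>(u,v)\<in>Pi. u \<noteq> v) \<and> (\<forall>c\<in>Pi. w c > 0)"

definition csp_val :: "('d \<Rightarrow> 'd \<Rightarrow> bool) \<Rightarrow> ('v \<times> 'v) set \<Rightarrow> (('v \<times> 'v) \<Rightarrow> real)
    \<Rightarrow> ('v \<Rightarrow> 'd) \<Rightarrow> real" where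
  "csp_val P Pi w A = (\<Sum>c\<in>Pi. w c * (if P (A (fst c)) (A (snd c)) then 1 else 0))"

definition is_sparsifier :: "('d \<Rightarrow> 'd \<Rightarrow> bool) \<Rightarrow> 'd set \<Rightarrow> 'v set \<Rightarrow> ('v \<times> 'v) set
    \<Rightarrow> (('v \<times> 'v) \<Rightarrow> real) \<Rightarrow> real \<Rightarrow> ('v \<times> 'v) set \<Rightarrow> (('v \<times> 'v) \<Rightarrow> real) \<Rightarrow> bool" where
  "is_sparsifier P D V Pi w \<epsilon> Pie we \<longleftrightarrow> Pie \<subseteq> Pi \<and> (\<forall>c\<in>Pie. we c > 0) \<and>
     (\<forall>A. (\<forall>x\<in>V. A x \<in> D) \<longrightarrow>
        (1 - \<epsilon>) * csp_val P Pi w A \<le> csp_val P Pie we A \<and>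
        csp_val P Pie we A \<le> (1 + \<epsilon>) * csp_val P Pi w A)"

definition restriction_singleton :: "('d \<Rightarrow> 'd \<Rightarrow> bool) \<Rightarrow> 'd set \<Rightarrow> 'd set \<Rightarrow> bool" where
  "restriction_singleton P B C \<longleftrightarrow> card {(b,c) \<in> B \<times> C. P b c} = 1"

end

theory Submission
  imports Defs "Jordan_Normal_Form.Determinant"
begin


definition fdot :: "nat \<Rightarrow> (nat \<Rightarrow> real) \<Rightarrow> (nat \<Rightarrow> real) \<Rightarrow> real" where
  "fdot n x y = (\<Sum>i<n. x i * y i)"
definition fmv :: "nat \<Rightarrow> (nat \<Rightarrow> nat \<Rightarrow> real) \<Rightarrow> (nat \<Rightarrow> real) \<Rightarrow> nat \<Rightarrow> real" where
  "fmv n M x = (\<lambda>i. \<Sum>j<n. M i j * x j)"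
definition fqf :: "nat \<Rightarrow> (nat \<Rightarrow> nat \<Rightarrow> real) \<Rightarrow> (nat \<Rightarrow> real) \<Rightarrow> real" where
  "fqf n M x = fdot n x (fmv n M x)"
definition fsym :: "nat \<Rightarrow> (nat \<Rightarrow> nat \<Rightarrow> real) \<Rightarrow> bool" where
  "fsym n M = (\<forall>i<n. \<forall>j<n. M i j = M j i)"
definition fpd :: "nat \<Rightarrow> (nat \<Rightarrow> nat \<Rightarrow> real) \<Rightarrow> bool" where
  "fpd n M = (fsym n M \<and> (\<forall>x. (\<exists>i<n. x i \<noteq> 0) \<longrightarrow> fqf n M x > 0))"
definition finv :: "nat \<Rightarrow> (nat \<Rightarrow> nat \<Rightarrow> real) \<Rightarrow> (nat \<Rightarrow> nat \<Rightarrow> real) \<Rightarrow> bool" where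
  "finv n M Y = (fsym n Y \<and> (\<forall>v. \<forall>i<n. fmv n M (fmv n Y v) i = v i)
      \<and> (\<forall>v. \<forall>i<n. fmv n Y (fmv n M v) i = v i))"

lemma sum_delta_r: "(\<Sum>k<(n::nat). f k * (if k = j then 1 else 0)) = (if j < n then f j else (0::real))"
proof -
  have "(\<Sum>k<n. f k * (if k = j then 1 else 0)) = (\<Sum>k<n. if k = j then f k else 0)"
    by (intro sum.cong) auto
  also have "\<dots> = (if j < n then f j else (0::real))" by simp
  finally show ?thesis .
qed
lemma sum_delta_l: "(\<Sum>k<(n::nat). (if k = j then 1 else 0) * f k) = (if j < n then f j else (0::real))"
proof -
  have "(\<Sum>k<n. (if k = j then 1 else 0) * f k) = (\<Sum>k<n. if k = j then f k else 0)"
    by (intro sum.cong) auto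
  also have "\<dots> = (if j < n then f j else (0::real))" by simp
  finally show ?thesis .
qed

lemma fdot_comm: "fdot n x y = fdot n y x"
  unfolding fdot_def by (simp add: mult.commute)

lemma fdot_cong: "(\<And>i. i < n \<Longrightarrow> x i = x' i) \<Longrightarrow> (\<And>i. i < n \<Longrightarrow> y i = y' i) \<Longrightarrow> fdot n x y = fdot n x' y'"
  unfolding fdot_def by (rule sum.cong) auto

lemma fmv_cong: "(\<And>i. i < n \<Longrightarrow> x i = x' i) \<Longrightarrow> fmv n M x = fmv n M x'"
  unfolding fmv_def by (intro ext sum.cong) auto

lemma fdot_add_left: "fdot n (\<lambda>i. x i + y i) z = fdot n x z + fdot n y z"
  unfolding fdot_def by (simp add: algebra_simps sum.distrib)
lemma fdot_add_right: "fdot n z (\<lambda>i. x i + y i) = fdot n z x + fdot n z y"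
  unfolding fdot_def by (simp add: algebra_simps sum.distrib)
lemma fdot_diff_left: "fdot n (\<lambda>i. x i - y i) z = fdot n x z - fdot n y z"
  unfolding fdot_def by (simp add: algebra_simps sum_subtractf)
lemma fdot_diff_right: "fdot n z (\<lambda>i. x i - y i) = fdot n z x - fdot n z y"
  unfolding fdot_def by (simp add: algebra_simps sum_subtractf)
lemma fdot_scale_left: "fdot n (\<lambda>i. c * x i) z = c * fdot n x z"
  unfolding fdot_def by (simp add: algebra_simps sum_distrib_left)
lemma fdot_scale_right: "fdot n z (\<lambda>i. c * x i) = c * fdot n z x"
  unfolding fdot_def by (simp add: algebra_simps sum_distrib_left)
lemma fdot_sum_left: "fdot n (\<lambda>i. \<Sum>e\<in>E. f e i) z = (\<Sum>e\<in>E. fdot n (f e) z)"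
  unfolding fdot_def by (simp add: sum_distrib_right sum.swap[of _ E])
lemma fdot_sum_right: "fdot n z (\<lambda>i. \<Sum>e\<in>E. f e i) = (\<Sum>e\<in>E. fdot n z (f e))"
  unfolding fdot_def by (simp add: sum_distrib_left sum.swap[of _ E])
lemma fdot_zero_left[simp]: "fdot n (\<lambda>i. 0) z = 0" unfolding fdot_def by simp
lemma fdot_self_nonneg: "fdot n x x \<ge> 0" unfolding fdot_def by (simp add: sum_nonneg)

lemma fmv_add_mat: "fmv n (\<lambda>i j. A i j + B i j) x = (\<lambda>i. fmv n A x i + fmv n B x i)"
  unfolding fmv_def by (simp add: algebra_simps sum.distrib)
lemma fmv_diff_mat: "fmv n (\<lambda>i j. A i j - B i j) x = (\<lambda>i. fmv n A x i - fmv n B x i)"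
  unfolding fmv_def by (simp add: algebra_simps sum_subtractf)
lemma fmv_scale_mat: "fmv n (\<lambda>i j. c * A i j) x = (\<lambda>i. c * fmv n A x i)"
  unfolding fmv_def by (simp add: algebra_simps sum_distrib_left)
lemma fmv_add: "fmv n M (\<lambda>i. x i + y i) = (\<lambda>i. fmv n M x i + fmv n M y i)"
  unfolding fmv_def by (simp add: algebra_simps sum.distrib)
lemma fmv_diff: "fmv n M (\<lambda>i. x i - y i) = (\<lambda>i. fmv n M x i - fmv n M y i)"
  unfolding fmv_def by (simp add: algebra_simps sum_subtractf)
lemma fmv_scale: "fmv n M (\<lambda>i. c * x i) = (\<lambda>i. c * fmv n M x i)"
  unfolding fmv_def by (simp add: algebra_simps sum_distrib_left)

lemma fsym_dot: assumes "fsym n M" shows "fdot n x (fmv n M y) = fdot n (fmv n M x) y"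
proof -
  have "fdot n x (fmv n M y) = (\<Sum>i<n. \<Sum>j<n. x i * M i j * y j)"
    unfolding fdot_def fmv_def by (simp add: sum_distrib_left mult.assoc)
  also have "\<dots> = (\<Sum>j<n. \<Sum>i<n. x i * M i j * y j)" by (rule sum.swap)
  also have "\<dots> = (\<Sum>j<n. \<Sum>i<n. M j i * x i * y j)"
    using assms unfolding fsym_def by (intro sum.cong refl) (auto simp: mult.commute)
  also have "\<dots> = fdot n (fmv n M x) y"
    unfolding fdot_def fmv_def by (simp add: sum_distrib_right)
  finally show ?thesis .
qed

lemma fqf_expand: assumes "fsym n M"
  shows "fqf n M (\<lambda>i. x i + c * y i) = fqf n M x + 2 * c * fdot n x (fmv n M y) + c^2 * fqf n M y"
proof -
  have s: "fdot n y (fmv n M x) = fdot n x (fmv n M y)"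
    using fsym_dot[OF assms, of y x] fdot_comm by metis
  show ?thesis
    unfolding fqf_def fmv_add fmv_scale fdot_add_left fdot_add_right fdot_scale_left fdot_scale_right
    using s by (simp add: power2_eq_square algebra_simps)
qed

lemma disc_le:
  fixes a b c :: real
  assumes "\<And>t. 0 \<le> a + 2 * b * t + c * t^2" and "c \<ge> 0"
  shows "b^2 \<le> a * c"
proof (cases "c = 0")
  case True
  have "b = 0"
  proof (rule ccontr)
    assume "b \<noteq> 0"
    have "0 \<le> a + 2 * b * (- (a + 1) / (2 * b))" using assms(1)[of "- (a + 1) / (2 * b)"] True by simp
    also have "\<dots> = -1" using \<open>b \<noteq> 0\<close> by (simp add: field_simps)
    finally show False by simp
  qed
  then show ?thesis using True by simp
next
  case False
  then have c: "c > 0" using assms(2) by simp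
  have "0 \<le> a + 2 * b * (- b / c) + c * (- b / c)^2" by (rule assms(1))
  also have "\<dots> = a - b^2 / c" using c by (simp add: field_simps power2_eq_square)
  finally have "b^2 / c \<le> a" by simp
  then show ?thesis using c by (simp add: field_simps mult.commute)
qed


lemma jnf_idx1: "i < n \<Longrightarrow> k < n \<Longrightarrow> B \<in> carrier_mat n n \<Longrightarrow> (B * mat n n (\<lambda>(i,j). M i j)) $$ (i,k) = (\<Sum>j<n. B $$ (i,j) * (M j k :: real))"
  apply (simp add: row_def col_def) 
  apply (simp add: scalar_prod_def atLeast0LessThan)
  done
lemma jnf_idx2: "i < n \<Longrightarrow> k < n \<Longrightarrow> B \<in> carrier_mat n n \<Longrightarrow> (mat n n (\<lambda>(i,j). M i j) * B) $$ (i,k) = (\<Sum>j<n. M i j * (B $$ (j,k) :: real))"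
  apply (simp add: row_def col_def) 
  apply (simp add: scalar_prod_def atLeast0LessThan)
  done

lemma fpd_ex_preinv:
  assumes "fpd n M"
  shows "\<exists>Y. (\<forall>v. \<forall>i<n. fmv n M (fmv n Y v) i = v i) \<and> (\<forall>v. \<forall>i<n. fmv n Y (fmv n M v) i = v i)"
proof -
  define A where "A = mat n n (\<lambda>(i,j). M i j)"
  have A: "A \<in> carrier_mat n n" unfolding A_def by simp
  have "det A \<noteq> 0"
  proof
    assume "det A = 0"
    then obtain v where v: "v \<in> carrier_vec n" "v \<noteq> 0\<^sub>v n" "A *\<^sub>v v = 0\<^sub>v n"
      using det_0_iff_vec_prod_zero_field[OF A] by auto
    define x where "x = (\<lambda>i. v $ i)"
    have nz: "\<exists>i<n. x i \<noteq> 0"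
    proof (rule ccontr)
      assume "\<not> ?thesis"
      then have "v = 0\<^sub>v n" using v(1) unfolding x_def by (intro eq_vecI) auto
      then show False using v(2) by simp
    qed
    have "\<And>i. i < n \<Longrightarrow> fmv n M x i = 0"
    proof -
      fix i assume i: "i < n"
      have "(A *\<^sub>v v) $ i = 0" using v(3) i by simp
      moreover have "(A *\<^sub>v v) $ i = fmv n M x i"
        using i v(1) unfolding A_def x_def fmv_def
        by (simp add: row_def) (simp add: scalar_prod_def atLeast0LessThan)
      ultimately show "fmv n M x i = 0" by simp
    qed
    then have "fqf n M x = 0" unfolding fqf_def fdot_def by simp
    then show False using assms nz unfolding fpd_def by auto
  qed
  from det_non_zero_imp_unit[OF A this, of "()"]
  obtain B where B: "B \<in> carrier_mat n n" "B * A = 1\<^sub>m n" "A * B = 1\<^sub>m n"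
    unfolding Units_def ring_mat_def by auto
  define Y where "Y = (\<lambda>i j. B $$ (i,j))"
  have AB: "(\<Sum>j<n. M i j * Y j k) = (if i = k then 1 else 0)" if "i < n" "k < n" for i k
  proof -
    have "(A * B) $$ (i,k) = (\<Sum>j<n. M i j * Y j k)"
      unfolding A_def Y_def by (rule jnf_idx2[OF that B(1)])
    moreover have "(A * B) $$ (i,k) = (if i = k then 1 else 0)" using B(3) that by simp
    ultimately show ?thesis by simp
  qed
  have BA: "(\<Sum>j<n. Y i j * M j k) = (if i = k then 1 else 0)" if "i < n" "k < n" for i k
  proof -
    have "(B * A) $$ (i,k) = (\<Sum>j<n. Y i j * M j k)"
      unfolding A_def Y_def by (rule jnf_idx1[OF that B(1)])
    moreover have "(B * A) $$ (i,k) = (if i = k then 1 else 0)" using B(2) that by simp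
    ultimately show ?thesis by simp
  qed
  have gen: "(\<Sum>j<n. P i j * (\<Sum>k<n. Q j k * v k)) = v i"
    if PQ: "\<And>k. k < n \<Longrightarrow> (\<Sum>j<n. P i j * Q j k) = (if i = k then 1 else 0)" and i: "i < n"
    for P Q :: "nat \<Rightarrow> nat \<Rightarrow> real" and v i
  proof -
    have "(\<Sum>j<n. P i j * (\<Sum>k<n. Q j k * v k)) = (\<Sum>j<n. \<Sum>k<n. P i j * Q j k * v k)"
      by (simp add: sum_distrib_left mult.assoc)
    also have "\<dots> = (\<Sum>k<n. \<Sum>j<n. P i j * Q j k * v k)" by (rule sum.swap)
    also have "\<dots> = (\<Sum>k<n. (\<Sum>j<n. P i j * Q j k) * v k)"
      by (simp add: sum_distrib_right)
    also have "\<dots> = (\<Sum>k<n. (if i = k then v k else 0))" by (intro sum.cong refl) (simp add: PQ)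
    also have "\<dots> = v i" using i by simp
    finally show ?thesis .
  qed
  show ?thesis
    by (rule exI[of _ Y]) (auto simp: fmv_def intro!: gen AB BA)
qed

lemma preinv_sym_dot:
  assumes M: "fsym n M" and inv1: "\<forall>v. \<forall>i<n. fmv n M (fmv n Y v) i = v i"
  shows "fdot n a (fmv n Y b) = fdot n (fmv n Y a) b"
proof -
  have "fdot n a (fmv n Y b) = fdot n (fmv n M (fmv n Y a)) (fmv n Y b)"
    using inv1 by (intro fdot_cong) auto
  also have "\<dots> = fdot n (fmv n Y a) (fmv n M (fmv n Y b))" using fsym_dot[OF M] by simp
  also have "\<dots> = fdot n (fmv n Y a) b" using inv1 by (intro fdot_cong) auto
  finally show ?thesis .
qed

lemma fpd_ex_inv:
  assumes "fpd n M" shows "\<exists>Y. finv n M Y"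
proof -
  obtain Y where Y: "\<forall>v. \<forall>i<n. fmv n M (fmv n Y v) i = v i" "\<forall>v. \<forall>i<n. fmv n Y (fmv n M v) i = v i"
    using fpd_ex_preinv[OF assms] by blast
  have M: "fsym n M" using assms unfolding fpd_def by simp
  have "fsym n Y" unfolding fsym_def
  proof (intro allI impI)
    fix i j assume ij: "i < n" "j < n"
    define ei where "ei = (\<lambda>k. if k = i then 1 else (0::real))"
    define ej where "ej = (\<lambda>k. if k = j then 1 else (0::real))"
    have 1: "fdot n ei (fmv n Y ej) = Y i j" using ij unfolding ei_def ej_def fdot_def fmv_def
      by (simp add: sum_delta_l sum_delta_r)
    have 2: "fdot n (fmv n Y ei) ej = Y j i" using ij unfolding ei_def ej_def fdot_def fmv_def
      by (simp add: sum_delta_l sum_delta_r)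
    show "Y i j = Y j i" using preinv_sym_dot[OF M Y(1), of ei ej] 1 2 by simp
  qed
  then show ?thesis using Y unfolding finv_def by blast
qed



lemma fqf_add_mat: "fqf n (\<lambda>i j. A i j + B i j) x = fqf n A x + fqf n B x"
  unfolding fqf_def fmv_add_mat fdot_add_right by simp
lemma fqf_diff_mat: "fqf n (\<lambda>i j. A i j - B i j) x = fqf n A x - fqf n B x"
  unfolding fqf_def fmv_diff_mat fdot_diff_right by simp
lemma fqf_scale_mat: "fqf n (\<lambda>i j. c * A i j) x = c * fqf n A x"
  unfolding fqf_def fmv_scale_mat fdot_scale_right by simp

lemma fdot_zero_on: "(\<And>i. i < n \<Longrightarrow> x i = 0) \<Longrightarrow> fdot n x y = 0"
  unfolding fdot_def by simp

lemma fpd_psd: assumes "fpd n M" shows "fqf n M x \<ge> 0"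
proof (cases "\<exists>i<n. x i \<noteq> 0")
  case True then show ?thesis using assms unfolding fpd_def by (auto intro: less_imp_le)
next
  case False then have "fqf n M x = 0" unfolding fqf_def by (intro fdot_zero_on) auto
  then show ?thesis by simp
qed

lemma fpd_sym: "fpd n M \<Longrightarrow> fsym n M" unfolding fpd_def by simp

lemma finv_sym: "finv n M Y \<Longrightarrow> fsym n Y" unfolding finv_def by simp
lemma finv_MY: "finv n M Y \<Longrightarrow> i < n \<Longrightarrow> fmv n M (fmv n Y v) i = v i" unfolding finv_def by simp
lemma finv_YM: "finv n M Y \<Longrightarrow> i < n \<Longrightarrow> fmv n Y (fmv n M v) i = v i" unfolding finv_def by simp

lemma finv_qf: assumes "fpd n M" "finv n M Y"
  shows "fqf n Y z = fqf n M (fmv n Y z)"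
proof -
  have "fqf n Y z = fdot n (fmv n Y z) z" unfolding fqf_def by (rule fdot_comm)
  also have "\<dots> = fdot n (fmv n Y z) (fmv n M (fmv n Y z))"
    by (rule fdot_cong) (simp_all add: finv_MY[OF assms(2)])
  also have "\<dots> = fqf n M (fmv n Y z)" unfolding fqf_def ..
  finally show ?thesis .
qed

lemma finv_psd: assumes "fpd n M" "finv n M Y" shows "fqf n Y z \<ge> 0"
  using finv_qf[OF assms] fpd_psd[OF assms(1)] by simp

lemma finv_pd: assumes "fpd n M" "finv n M Y" and nz: "\<exists>i<n. z i \<noteq> 0" shows "fqf n Y z > 0"
proof -
  have "\<exists>i<n. fmv n Y z i \<noteq> 0"
  proof (rule ccontr)
    assume "\<not> ?thesis"
    then have "\<And>i. i < n \<Longrightarrow> z i = 0"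
    proof -
      fix i assume i: "i < n" and h: "\<not> (\<exists>i<n. fmv n Y z i \<noteq> 0)"
      have "z i = fmv n M (fmv n Y z) i" using finv_MY[OF assms(2) i] by simp
      also have "\<dots> = 0" unfolding fmv_def[of n M "fmv n Y z"] using h by simp
      finally show "z i = 0" .
    qed
    then show False using nz by auto
  qed
  then show ?thesis using finv_qf[OF assms(1,2)] assms(1) unfolding fpd_def by auto
qed

lemma finv_fpd: assumes "fpd n M" "finv n M Y" shows "fpd n Y"
  using finv_pd[OF assms] finv_sym[OF assms(2)] unfolding fpd_def by auto

lemma finv_unique: assumes "finv n M Y" "finv n M Y'" "i < n"
  shows "fmv n Y v i = fmv n Y' v i"
proof -
  have "fmv n Y v = fmv n Y (fmv n M (fmv n Y' v))"
    using finv_MY[OF assms(2)] by (intro fmv_cong) simp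
  then have "fmv n Y v i = fmv n Y (fmv n M (fmv n Y' v)) i" by simp
  also have "\<dots> = fmv n Y' v i" using finv_YM[OF assms(1) assms(3)] .
  finally show ?thesis .
qed

lemma CS_family:
  assumes sym: "fsym n X" and psd: "\<And>x. fqf n X x \<ge> 0"
  shows "(\<Sum>e\<in>F. fdot n (a e) (fmv n X (b e)))^2 \<le> (\<Sum>e\<in>F. fqf n X (a e)) * (\<Sum>e\<in>F. fqf n X (b e))"
proof -
  have "0 \<le> (\<Sum>e\<in>F. fqf n X (a e)) + 2 * (\<Sum>e\<in>F. fdot n (a e) (fmv n X (b e))) * t + (\<Sum>e\<in>F. fqf n X (b e)) * t^2"
    for t
  proof -
    have "0 \<le> (\<Sum>e\<in>F. fqf n X (\<lambda>i. a e i + t * b e i))" by (intro sum_nonneg psd)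
    also have "\<dots> = (\<Sum>e\<in>F. fqf n X (a e) + 2 * t * fdot n (a e) (fmv n X (b e)) + t^2 * fqf n X (b e))"
      using fqf_expand[OF sym] by simp
    also have "\<dots> = (\<Sum>e\<in>F. fqf n X (a e)) + 2 * (\<Sum>e\<in>F. fdot n (a e) (fmv n X (b e))) * t + (\<Sum>e\<in>F. fqf n X (b e)) * t^2"
      by (simp add: sum.distrib sum_distrib_left sum_distrib_right algebra_simps)
    finally show ?thesis .
  qed
  then show ?thesis by (intro disc_le) (auto intro: sum_nonneg psd)
qed

lemma CS_single:
  assumes sym: "fsym n X" and psd: "\<And>x. fqf n X x \<ge> 0"
  shows "(fdot n a (fmv n X b))^2 \<le> fqf n X a * fqf n X b"
  using CS_family[OF sym psd, where F="{()}" and a="\<lambda>_. a" and b="\<lambda>_. b"] by simp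

lemma resolvent:
  assumes Y: "finv n M Y" and Y': "finv n (\<lambda>i j. M i j + K i j) Y'" and i: "i < n"
  shows "fmv n Y z i - fmv n Y' z i = fmv n Y (fmv n K (fmv n Y' z)) i"
    and "fmv n Y z i - fmv n Y' z i = fmv n Y' (fmv n K (fmv n Y z)) i"
proof -
  let ?M' = "\<lambda>i j. M i j + K i j"
  have "fmv n Y z = fmv n Y (fmv n ?M' (fmv n Y' z))"
    using finv_MY[OF Y'] by (intro fmv_cong) simp
  then have "fmv n Y z i = fmv n Y (fmv n ?M' (fmv n Y' z)) i" by simp
  also have "\<dots> = fmv n Y (\<lambda>j. fmv n M (fmv n Y' z) j + fmv n K (fmv n Y' z) j) i"
    by (simp only: fmv_add_mat)
  also have "\<dots> = fmv n Y (fmv n M (fmv n Y' z)) i + fmv n Y (fmv n K (fmv n Y' z)) i"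
    by (simp only: fmv_add)
  also have "\<dots> = fmv n Y' z i + fmv n Y (fmv n K (fmv n Y' z)) i"
    using finv_YM[OF Y i] by simp
  finally show "fmv n Y z i - fmv n Y' z i = fmv n Y (fmv n K (fmv n Y' z)) i" by simp
  have e1: "fmv n Y z i = fmv n Y' (fmv n ?M' (fmv n Y z)) i"
    using finv_YM[OF Y' i] by simp
  have e2: "fmv n ?M' (fmv n Y z) = (\<lambda>i. fmv n M (fmv n Y z) i + fmv n K (fmv n Y z) i)"
    by (rule fmv_add_mat)
  have e3: "fmv n Y' (\<lambda>i. fmv n M (fmv n Y z) i + fmv n K (fmv n Y z) i) = fmv n Y' (\<lambda>i. z i + fmv n K (fmv n Y z) i)"
    using finv_MY[OF Y] by (intro fmv_cong) auto
  have e4: "fmv n Y' (\<lambda>i. z i + fmv n K (fmv n Y z) i) i = fmv n Y' z i + fmv n Y' (fmv n K (fmv n Y z)) i"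
    unfolding fmv_add by simp
  have "fmv n Y z i = fmv n Y' z i + fmv n Y' (fmv n K (fmv n Y z)) i"
    using e1 e2 e3 e4 by simp
  then show "fmv n Y z i - fmv n Y' z i = fmv n Y' (fmv n K (fmv n Y z)) i" by simp
qed


lemma fmv_r1: "fmv n (\<lambda>i j. M i j + t * w i * w j) x = (\<lambda>i. fmv n M x i + t * w i * fdot n w x)"
  unfolding fmv_def fdot_def by (simp add: algebra_simps sum.distrib sum_distrib_left)
lemma fmv_r1m: "fmv n (\<lambda>i j. M i j - t * w i * w j) x = (\<lambda>i. fmv n M x i - t * w i * fdot n w x)"
  unfolding fmv_def fdot_def by (simp add: algebra_simps sum_subtractf sum_distrib_left)
lemma fqf_r1: "fqf n (\<lambda>i j. M i j + t * w i * w j) x = fqf n M x + t * (fdot n w x)^2"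
proof -
  have "fqf n (\<lambda>i j. M i j + t * w i * w j) x = fdot n x (\<lambda>i. fmv n M x i + (t * fdot n w x) * w i)"
    unfolding fqf_def fmv_r1 by (simp add: algebra_simps)
  also have "\<dots> = fqf n M x + t * (fdot n w x)^2"
    unfolding fdot_add_right fdot_scale_right fqf_def by (simp add: fdot_comm power2_eq_square)
  finally show ?thesis .
qed

lemma rank1:
  assumes M: "fpd n M" and Y: "finv n M Y" and c: "1 + t * fdot n w (fmv n Y w) > 0"
  shows "fpd n (\<lambda>i j. M i j + t * w i * w j)"
    and "finv n (\<lambda>i j. M i j + t * w i * w j)
           (\<lambda>i j. Y i j - (t / (1 + t * fdot n w (fmv n Y w))) * fmv n Y w i * fmv n Y w j)"
proof -
  define a where "a = fdot n w (fmv n Y w)"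
  define y where "y = fmv n Y w"
  define c where "c = t / (1 + t * a)"
  have ca: "c * (1 + t * a) = t" using c unfolding c_def a_def by simp
  have Ms: "fsym n M" using M by (rule fpd_sym)
  have Ys: "fsym n Y" using Y by (rule finv_sym)
  have k1: "fdot n w (fmv n Y v) = fdot n y v" for v unfolding y_def by (rule fsym_dot[OF Ys])
  have k2: "fmv n M y i = w i" if "i < n" for i unfolding y_def using finv_MY[OF Y that] .
  have k3: "fdot n y (fmv n M v) = fdot n w v" for v
  proof -
    have "fdot n y (fmv n M v) = fdot n (fmv n M y) v" by (rule fsym_dot[OF Ms])
    also have "\<dots> = fdot n w v" by (rule fdot_cong) (auto simp: k2)
    finally show ?thesis .
  qed
  have k4: "fdot n y w = a" unfolding a_def y_def by (rule fdot_comm)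
  have qa: "fqf n M y = a" unfolding fqf_def using k3[of y] k4 by (simp add: fdot_comm)
  show "fpd n (\<lambda>i j. M i j + t * w i * w j)"
    unfolding fpd_def
  proof (intro conjI allI impI)
    show "fsym n (\<lambda>i j. M i j + t * w i * w j)" using Ms unfolding fsym_def by simp
    fix x :: "nat \<Rightarrow> real" assume nz: "\<exists>i<n. x i \<noteq> 0"
    have q: "fqf n M x > 0" using M nz unfolding fpd_def by auto
    have wx: "(fdot n w x)^2 \<le> a * fqf n M x"
    proof -
      have "fdot n w x = fdot n y (fmv n M x)" using k3 by simp
      moreover have "(fdot n y (fmv n M x))^2 \<le> fqf n M y * fqf n M x"
        by (rule CS_single[OF Ms fpd_psd[OF M]])
      ultimately show ?thesis using qa by simp
    qed
    have e: "fqf n (\<lambda>i j. M i j + t * w i * w j) x = fqf n M x + t * (fdot n w x)^2" by (rule fqf_r1)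
    show "fqf n (\<lambda>i j. M i j + t * w i * w j) x > 0"
    proof (cases "t \<ge> 0")
      case True
      have "t * (fdot n w x)^2 \<ge> 0" using True by simp
      then show ?thesis using e q by linarith
    next
      case False
      then have "t * (a * fqf n M x) \<le> t * (fdot n w x)^2" using wx
        by (intro mult_left_mono_neg) auto
      moreover have "(1 + t * a) * fqf n M x > 0" using q c unfolding a_def by simp
      ultimately show ?thesis using e by (simp add: algebra_simps)
    qed
  qed
  let ?M2 = "\<lambda>i j. M i j + t * w i * w j"
  let ?Y2 = "\<lambda>i j. Y i j - c * y i * y j"
  have Y2v: "fmv n ?Y2 v = (\<lambda>j. fmv n Y v j - (c * fdot n y v) * y j)" for v
    unfolding fmv_r1m by (simp add: algebra_simps)
  have inv1: "fmv n ?M2 (fmv n ?Y2 v) i = v i" if i: "i < n" for v i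
  proof -
    have "fmv n ?M2 (fmv n ?Y2 v) i = fmv n M (fmv n ?Y2 v) i + t * w i * fdot n w (fmv n ?Y2 v)"
      unfolding fmv_r1 by simp
    also have "fmv n M (fmv n ?Y2 v) i = fmv n M (fmv n Y v) i - (c * fdot n y v) * fmv n M y i"
      unfolding Y2v fmv_diff fmv_scale by simp
    also have "\<dots> = v i - (c * fdot n y v) * w i" using finv_MY[OF Y i] k2[OF i] by simp
    also have "fdot n w (fmv n ?Y2 v) = fdot n w (fmv n Y v) - (c * fdot n y v) * fdot n w y"
      unfolding Y2v fdot_diff_right fdot_scale_right by simp
    also have "\<dots> = fdot n y v - c * fdot n y v * a" using k1 k4 fdot_comm[of n w y] by simp
    finally have "fmv n ?M2 (fmv n ?Y2 v) i = v i + w i * fdot n y v * (t - c * (1 + t * a))"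
      by (simp add: algebra_simps)
    then show ?thesis using ca by simp
  qed
  have inv2: "fmv n ?Y2 (fmv n ?M2 v) i = v i" if i: "i < n" for v i
  proof -
    have u: "fmv n ?M2 v = (\<lambda>i. fmv n M v i + (t * fdot n w v) * w i)"
      unfolding fmv_r1 by (simp add: algebra_simps)
    have 1: "fmv n ?Y2 (fmv n ?M2 v) i = fmv n Y (fmv n ?M2 v) i - (c * fdot n y (fmv n ?M2 v)) * y i"
      unfolding Y2v by simp
    have 2: "fmv n Y (fmv n ?M2 v) i = v i + (t * fdot n w v) * y i"
      unfolding u fmv_add fmv_scale y_def using finv_YM[OF Y i] by simp
    have 3: "fdot n y (fmv n ?M2 v) = fdot n w v + (t * fdot n w v) * a"
      unfolding u fdot_add_right fdot_scale_right k3 k4 by simp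
    have "fmv n ?Y2 (fmv n ?M2 v) i = v i + (t * fdot n w v) * y i - (c * (fdot n w v + (t * fdot n w v) * a)) * y i"
      unfolding 1 2 3 ..
    then have "fmv n ?Y2 (fmv n ?M2 v) i = v i + y i * fdot n w v * (t - c * (1 + t * a))"
      by (simp add: algebra_simps)
    then show ?thesis using ca by simp
  qed
  have "fsym n ?Y2" using Ys unfolding fsym_def by simp
  then show "finv n ?M2 (\<lambda>i j. Y i j - (t / (1 + t * fdot n w (fmv n Y w))) * fmv n Y w i * fmv n Y w j)"
    unfolding finv_def using inv1 inv2 unfolding c_def a_def y_def by blast
qed



lemma param_arith:
  fixes e K N :: real
  assumes e0: "0 < e" and e1: "e < 1" and N: "N \<ge> 1" and K: "K \<ge> 12 * N / e^2"
  defines "u \<equiv> N / (e/6) + K * (1 / (1 - 3 * (e/6)))" and "l \<equiv> - N / (e/6) + K * 1"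
  shows "l > 0" and "u \<ge> l" and "2 * l / (l + u) \<ge> 1 - e" and "2 * u / (l + u) \<le> 1 + e"
proof -
  define q where "q = 1 / (1 - e/2)"
  have q1: "q \<ge> 1" unfolding q_def using e0 e1 by (simp add: field_simps)
  have q2: "q - 1 \<le> e" unfolding q_def using e0 e1 by (simp add: field_simps)
  have uq: "u = 6 * N / e + K * q" unfolding u_def q_def by (simp add: field_simps)
  have lq: "l = K - 6 * N / e" unfolding l_def by (simp add: field_simps)
  have Ke: "12 * N / e \<le> K * e"
  proof -
    have "12 * N / e = (12 * N / e^2) * e" using e0 by (simp add: field_simps power2_eq_square)
    also have "\<dots> \<le> K * e" using K e0 by (intro mult_right_mono) auto
    finally show ?thesis .
  qed
  have "6 * N / e < 12 * N / e" using N e0 by (simp add: field_simps)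
  moreover have K0: "K > 0" using K N e0 by (smt (verit) divide_pos_pos zero_less_power)
  moreover have "K * e < K" using K0 e1 by simp
  ultimately show lpos: "l > 0" unfolding lq using Ke by linarith
  have d: "u - l = 12 * N / e + K * (q - 1)" unfolding uq lq by (simp add: algebra_simps)
  have s: "u + l = K * (1 + q)" unfolding uq lq by (simp add: algebra_simps)
  have kq: "K * (q - 1) \<le> K * e" using q2 K0 by (intro mult_left_mono) auto
  have kq2: "K * e * 2 \<le> e * (K * (1 + q))"
  proof -
    have "K * e * 2 = e * (K * 2)" by simp
    also have "\<dots> \<le> e * (K * (1 + q))" using q1 K0 e0 by (intro mult_left_mono) auto
    finally show ?thesis .
  qed
  have key: "u - l \<le> e * (u + l)" unfolding d s using Ke kq kq2 by linarith
  have "K * (q - 1) \<ge> 0" using K0 q1 by simp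
  moreover have "12 * N / e \<ge> 0" using N e0 by simp
  ultimately have ul: "u \<ge> l" using d by linarith
  then show "u \<ge> l" .
  have lu: "l + u > 0" using lpos ul by simp
  show "2 * l / (l + u) \<ge> 1 - e" using key lu by (simp add: field_simps)
  show "2 * u / (l + u) \<le> 1 + e" using key lu by (simp add: field_simps)
qed

locale bss =
  fixes n :: nat and E :: "'e set" and w :: "'e \<Rightarrow> nat \<Rightarrow> real" and J :: "nat set"
  assumes finE: "finite E" and Jn: "J \<subseteq> {..<n}"
begin

definition G where "G = (\<lambda>i j. \<Sum>e\<in>E. w e i * w e j)"
definition Pm where "Pm = (\<lambda>i j. if i = j \<and> i \<in> J then 1 else (0::real))"
definition Am where "Am s = (\<lambda>i j. \<Sum>e\<in>E. s e * w e i * w e j)"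
definition T where "T Y = (\<Sum>e\<in>E. fdot n (w e) (fmv n Y (w e)))"
definition Mu where "Mu u s = (\<lambda>i j. u * G i j - Am s i j + Pm i j)"
definition Nl where "Nl l s = (\<lambda>i j. Am s i j - l * G i j + Pm i j)"
definition minv where "minv M = (SOME Y. finv n M Y)"

lemma Am_mv: "fmv n (Am s) x = (\<lambda>i. \<Sum>e\<in>E. w e i * (s e * fdot n (w e) x))"
proof
  fix i
  have "fmv n (Am s) x i = (\<Sum>j<n. \<Sum>e\<in>E. w e i * (s e * (w e j * x j)))"
    unfolding fmv_def Am_def by (simp add: sum_distrib_right sum_distrib_left algebra_simps)
  also have "\<dots> = (\<Sum>e\<in>E. \<Sum>j<n. w e i * (s e * (w e j * x j)))" by (rule sum.swap)
  also have "\<dots> = (\<Sum>e\<in>E. w e i * (s e * fdot n (w e) x))"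
    unfolding fdot_def by (simp add: sum_distrib_left)
  finally show "fmv n (Am s) x i = (\<Sum>e\<in>E. w e i * (s e * fdot n (w e) x))" .
qed

lemma G_Am: "G = Am (\<lambda>_. 1)" unfolding G_def Am_def by simp

lemma G_mv: "fmv n G x = (\<lambda>i. \<Sum>e\<in>E. w e i * fdot n (w e) x)"
  unfolding G_Am Am_mv by simp

lemma Am_dot: "fdot n y (fmv n (Am s) x) = (\<Sum>e\<in>E. s e * (fdot n (w e) y * fdot n (w e) x))"
  unfolding Am_mv fdot_sum_right
proof (rule sum.cong[OF refl])
  fix e
  have "fdot n y (\<lambda>i. w e i * (s e * fdot n (w e) x)) = fdot n y (\<lambda>i. (s e * fdot n (w e) x) * w e i)"
    by (simp add: mult.commute)
  also have "\<dots> = s e * (fdot n (w e) y * fdot n (w e) x)"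
    unfolding fdot_scale_right by (simp add: fdot_comm)
  finally show "fdot n y (\<lambda>i. w e i * (s e * fdot n (w e) x)) = s e * (fdot n (w e) y * fdot n (w e) x)" .
qed

lemma G_dot: "fdot n y (fmv n G x) = (\<Sum>e\<in>E. fdot n (w e) y * fdot n (w e) x)"
  unfolding G_Am Am_dot by simp

lemma Am_qf: "fqf n (Am s) x = (\<Sum>e\<in>E. s e * (fdot n (w e) x)^2)"
  unfolding fqf_def Am_dot by (simp add: power2_eq_square)

lemma G_qf: "fqf n G x = (\<Sum>e\<in>E. (fdot n (w e) x)^2)"
  unfolding G_Am Am_qf by simp

lemma G_qf_nonneg: "fqf n G x \<ge> 0" unfolding G_qf by (simp add: sum_nonneg)

lemma Pm_qf: "fqf n Pm x = (\<Sum>j\<in>J. (x j)^2)"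
proof -
  have mv: "fmv n Pm x i = (if i \<in> J then x i else 0)" for i
  proof -
    have "fmv n Pm x i = (\<Sum>j<n. if j = i then (if i \<in> J then x j else 0) else 0)"
      unfolding fmv_def Pm_def by (intro sum.cong) auto
    also have "\<dots> = (if i < n then (if i \<in> J then x i else 0) else 0)" by simp
    also have "\<dots> = (if i \<in> J then x i else 0)" using Jn by auto
    finally show ?thesis .
  qed
  have "fqf n Pm x = (\<Sum>i<n. if i \<in> J then (x i)^2 else 0)"
    unfolding fqf_def fdot_def mv by (intro sum.cong) (auto simp: power2_eq_square)
  also have "\<dots> = (\<Sum>i\<in>{..<n} \<inter> J. (x i)^2)" by (simp add: sum.inter_restrict)
  also have "{..<n} \<inter> J = J" using Jn by auto
  finally show ?thesis .
qed

lemma Pm_qf_nonneg: "fqf n Pm x \<ge> 0" unfolding Pm_qf by (simp add: sum_nonneg)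

lemma G_sym: "fsym n G" unfolding fsym_def G_def by (simp add: mult.commute)
lemma Am_sym: "fsym n (Am s)" unfolding fsym_def Am_def by (simp add: mult.commute mult.left_commute)
lemma Pm_sym: "fsym n Pm" unfolding fsym_def Pm_def by auto

lemma T_cong: assumes "\<And>v i. i < n \<Longrightarrow> fmv n Y v i = fmv n Y' v i" shows "T Y = T Y'"
  unfolding T_def by (intro sum.cong refl fdot_cong) (auto simp: assms)

lemma minv_finv: "fpd n M \<Longrightarrow> finv n M (minv M)"
  unfolding minv_def using fpd_ex_inv by (metis someI_ex)

lemma T_minv: "fpd n M \<Longrightarrow> finv n M Y \<Longrightarrow> T (minv M) = T Y"
  by (rule T_cong) (rule finv_unique[OF minv_finv])

lemma T_qf: "T Y = (\<Sum>e\<in>E. fqf n Y (w e))" unfolding T_def fqf_def ..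


lemma barrier_pd:
  assumes N: "fpd n N" and Z: "finv n N Z" and d: "\<delta> \<ge> 0" and dT: "\<delta> * T Z < 1"
  shows "fpd n (\<lambda>i j. N i j + (-\<delta>) * G i j)"
proof -
  have Ns: "fsym n N" using N by (rule fpd_sym)
  have key: "fqf n G x \<le> fqf n N x * T Z" for x
  proof -
    have "(fdot n (w e) x)^2 \<le> fqf n N x * fqf n Z (w e)" for e
    proof -
      have "fdot n (w e) x = fdot n (fmv n N (fmv n Z (w e))) x"
        by (rule fdot_cong) (auto simp: finv_MY[OF Z])
      also have "\<dots> = fdot n (fmv n Z (w e)) (fmv n N x)" by (rule fsym_dot[OF Ns, symmetric])
      finally have "(fdot n (w e) x)^2 \<le> fqf n N (fmv n Z (w e)) * fqf n N x"
        using CS_single[OF Ns fpd_psd[OF N]] by simp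
      then show ?thesis using finv_qf[OF N Z] by (simp add: mult.commute)
    qed
    then have "fqf n G x \<le> (\<Sum>e\<in>E. fqf n N x * fqf n Z (w e))" unfolding G_qf by (rule sum_mono)
    also have "\<dots> = fqf n N x * T Z" unfolding T_qf by (simp add: sum_distrib_left)
    finally show ?thesis .
  qed
  show ?thesis unfolding fpd_def
  proof (intro conjI allI impI)
    show "fsym n (\<lambda>i j. N i j + (-\<delta>) * G i j)" using Ns G_sym unfolding fsym_def by simp
    fix x :: "nat \<Rightarrow> real" assume nz: "\<exists>i<n. x i \<noteq> 0"
    have q: "fqf n N x > 0" using N nz unfolding fpd_def by auto
    have e: "fqf n (\<lambda>i j. N i j + (-\<delta>) * G i j) x = fqf n N x - \<delta> * fqf n G x"
      by (simp add: fqf_add_mat fqf_diff_mat fqf_scale_mat)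
    have 1: "\<delta> * fqf n G x \<le> \<delta> * (fqf n N x * T Z)" by (rule mult_left_mono[OF key d])
    have 2: "fqf n N x * (1 - \<delta> * T Z) > 0" using q dT by simp
    show "fqf n (\<lambda>i j. N i j + (-\<delta>) * G i j) x > 0" using e 1 2 by (simp add: algebra_simps)
  qed
qed

lemma pos_term:
  assumes M: "fpd n M" and Y: "finv n M Y" and nd: "\<exists>e\<in>E. \<exists>i<n. w e i \<noteq> 0"
  shows "(\<Sum>e\<in>E. fqf n G (fmv n Y (w e))) > 0"
proof -
  obtain e0 i0 where e0: "e0 \<in> E" "i0 < n" "w e0 i0 \<noteq> 0" using nd by auto
  have p: "fqf n Y (w e0) > 0" by (rule finv_pd[OF M Y]) (use e0 in auto)
  have "(fdot n (w e0) (fmv n Y (w e0)))^2 \<le> fqf n G (fmv n Y (w e0))"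
    unfolding G_qf by (rule member_le_sum) (use e0 finE in auto)
  moreover have "(fdot n (w e0) (fmv n Y (w e0)))^2 > 0" using p unfolding fqf_def by simp
  moreover have "fqf n G (fmv n Y (w e0)) \<le> (\<Sum>e\<in>E. fqf n G (fmv n Y (w e)))"
    by (rule member_le_sum) (use e0 finE G_qf_nonneg in auto)
  ultimately show ?thesis by linarith
qed

lemma upper_sums:
  assumes M: "fpd n M" and Y: "finv n M Y" and d: "\<delta> > 0"
    and M': "fpd n (\<lambda>i j. M i j + \<delta> * G i j)" and Y': "finv n (\<lambda>i j. M i j + \<delta> * G i j) Y'"
  shows "\<delta> * (\<Sum>e\<in>E. fqf n G (fmv n Y' (w e))) \<le> T Y - T Y'"
    and "(\<exists>e\<in>E. \<exists>i<n. w e i \<noteq> 0) \<Longrightarrow> T Y - T Y' > 0"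
proof -
  have Ys: "fsym n Y" using Y by (rule finv_sym)
  define g where "g e = fmv n G (fmv n Y' (w e))" for e
  have res: "fmv n Y z i - fmv n Y' z i = \<delta> * fmv n Y (fmv n G (fmv n Y' z)) i" if "i < n" for z i
    using resolvent(1)[OF Y Y' that, of z] unfolding fmv_scale_mat fmv_scale by simp
  define R where "R = (\<Sum>e\<in>E. fdot n (fmv n Y (w e)) (g e))"
  have DU: "T Y - T Y' = \<delta> * R"
  proof -
    have "T Y - T Y' = (\<Sum>e\<in>E. fdot n (w e) (\<lambda>i. fmv n Y (w e) i - fmv n Y' (w e) i))"
      unfolding T_def fdot_diff_right by (simp add: sum_subtractf)
    also have "\<dots> = (\<Sum>e\<in>E. fdot n (w e) (\<lambda>i. \<delta> * fmv n Y (g e) i))"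
      unfolding g_def by (intro sum.cong refl fdot_cong) (auto simp: res)
    also have "\<dots> = \<delta> * R" unfolding R_def fdot_scale_right sum_distrib_left
      by (intro sum.cong refl) (simp add: fsym_dot[OF Ys])
    finally show ?thesis .
  qed
  have bR: "(\<Sum>e\<in>E. fqf n G (fmv n Y' (w e))) \<le> R"
  proof -
    have "R - (\<Sum>e\<in>E. fqf n G (fmv n Y' (w e))) = (\<Sum>e\<in>E. fdot n (\<lambda>i. fmv n Y (w e) i - fmv n Y' (w e) i) (g e))"
      unfolding R_def fqf_def g_def fdot_diff_left by (simp add: sum_subtractf)
    also have "\<dots> = (\<Sum>e\<in>E. \<delta> * fqf n Y (g e))"
    proof (intro sum.cong refl)
      fix e
      have "fdot n (\<lambda>i. fmv n Y (w e) i - fmv n Y' (w e) i) (g e) = fdot n (\<lambda>i. \<delta> * fmv n Y (g e) i) (g e)"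
        unfolding g_def by (intro fdot_cong) (auto simp: res)
      also have "\<dots> = \<delta> * fqf n Y (g e)" unfolding fdot_scale_left fqf_def by (simp add: fdot_comm)
      finally show "fdot n (\<lambda>i. fmv n Y (w e) i - fmv n Y' (w e) i) (g e) = \<delta> * fqf n Y (g e)" .
    qed
    also have "\<dots> \<ge> 0" using finv_psd[OF M Y] d by (simp add: sum_nonneg)
    finally show ?thesis by simp
  qed
  show "\<delta> * (\<Sum>e\<in>E. fqf n G (fmv n Y' (w e))) \<le> T Y - T Y'"
    using bR d DU by (simp add: mult_left_mono)
  assume nd: "\<exists>e\<in>E. \<exists>i<n. w e i \<noteq> 0"
  have "R > 0" using pos_term[OF M' Y' nd] bR by linarith
  then show "T Y - T Y' > 0" using DU d by simp
qed

lemma lower_sums: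
  assumes N: "fpd n N" and Z: "finv n N Z" and d: "\<delta> > 0"
    and N': "fpd n (\<lambda>i j. N i j + (-\<delta>) * G i j)" and Z': "finv n (\<lambda>i j. N i j + (-\<delta>) * G i j) Z'"
    and dT: "\<delta> * T Z \<le> 1" and nd: "\<exists>e\<in>E. \<exists>i<n. w e i \<noteq> 0"
  shows "T Z' - T Z > 0"
    and "(\<Sum>e\<in>E. fqf n G (fmv n Z' (w e))) / (T Z' - T Z) - T Z' \<ge> 1 / \<delta> - T Z"
proof -
  have Zs: "fsym n Z" using Z by (rule finv_sym)
  have res1: "fmv n Z' z i - fmv n Z z i = \<delta> * fmv n Z (fmv n G (fmv n Z' z)) i" if "i < n" for z i
    using resolvent(1)[OF Z Z' that, of z] unfolding fmv_scale_mat fmv_scale by simp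
  have res2: "fmv n Z' z i - fmv n Z z i = \<delta> * fmv n Z' (fmv n G (fmv n Z z)) i" if "i < n" for z i
    using resolvent(2)[OF Z Z' that, of z] unfolding fmv_scale_mat fmv_scale by simp
  define g where "g e = fmv n G (fmv n Z' (w e))" for e
  define h where "h e = fmv n G (fmv n Z (w e))" for e
  define r where "r = (\<Sum>e\<in>E. fdot n (fmv n Z (w e)) (g e))"
  define m where "m = (\<Sum>e\<in>E. fqf n Z (g e))"
  define s2 where "s2 = (\<Sum>e\<in>E. fqf n G (fmv n Z' (w e)))"
  define p where "p = T Z"
  have DL: "T Z' - T Z = \<delta> * r"
  proof -
    have "T Z' - T Z = (\<Sum>e\<in>E. fdot n (w e) (\<lambda>i. fmv n Z' (w e) i - fmv n Z (w e) i))"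
      unfolding T_def fdot_diff_right by (simp add: sum_subtractf)
    also have "\<dots> = (\<Sum>e\<in>E. fdot n (w e) (\<lambda>i. \<delta> * fmv n Z (g e) i))"
      unfolding g_def by (intro sum.cong refl fdot_cong) (auto simp: res1)
    also have "\<dots> = \<delta> * r" unfolding r_def fdot_scale_right sum_distrib_left
      by (intro sum.cong refl) (simp add: fsym_dot[OF Zs])
    finally show ?thesis .
  qed
  have s2r: "s2 - r = \<delta> * m"
  proof -
    have "s2 - r = (\<Sum>e\<in>E. fdot n (\<lambda>i. fmv n Z' (w e) i - fmv n Z (w e) i) (g e))"
      unfolding s2_def r_def fqf_def g_def fdot_diff_left by (simp add: sum_subtractf)
    also have "\<dots> = (\<Sum>e\<in>E. \<delta> * fqf n Z (g e))"
    proof (intro sum.cong refl)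
      fix e
      have "fdot n (\<lambda>i. fmv n Z' (w e) i - fmv n Z (w e) i) (g e) = fdot n (\<lambda>i. \<delta> * fmv n Z (g e) i) (g e)"
        unfolding g_def by (intro fdot_cong) (auto simp: res1)
      also have "\<dots> = \<delta> * fqf n Z (g e)" unfolding fdot_scale_left fqf_def by (simp add: fdot_comm)
      finally show "fdot n (\<lambda>i. fmv n Z' (w e) i - fmv n Z (w e) i) (g e) = \<delta> * fqf n Z (g e)" .
    qed
    finally show ?thesis unfolding m_def by (simp add: sum_distrib_left)
  qed
  have m0: "m \<ge> 0" unfolding m_def using finv_psd[OF N Z] by (simp add: sum_nonneg)
  have CS: "r^2 \<le> p * m"
  proof -
    have "r = (\<Sum>e\<in>E. fdot n (w e) (fmv n Z (g e)))" unfolding r_def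
      by (intro sum.cong refl) (simp add: fsym_dot[OF Zs])
    then show ?thesis unfolding p_def m_def T_qf
      using CS_family[OF Zs finv_psd[OF N Z], where F=E and a=w and b=g] by simp
  qed
  have rpos: "r > 0"
  proof -
    define r0 where "r0 = (\<Sum>e\<in>E. fqf n G (fmv n Z (w e)))"
    have r0: "r0 > 0" unfolding r0_def by (rule pos_term[OF N Z nd])
    have "r - r0 = (\<Sum>e\<in>E. \<delta> * fqf n Z' (h e))"
    proof -
      have "r - r0 = (\<Sum>e\<in>E. fdot n (fmv n Z (w e)) (\<lambda>i. g e i - h e i))"
        unfolding r_def r0_def fqf_def fdot_diff_right h_def by (simp add: sum_subtractf)
      also have "\<dots> = (\<Sum>e\<in>E. \<delta> * fqf n Z' (h e))"
      proof (intro sum.cong refl)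
        fix e
        have "(\<lambda>i. g e i - h e i) = fmv n G (\<lambda>i. fmv n Z' (w e) i - fmv n Z (w e) i)"
          unfolding g_def h_def fmv_diff ..
        also have "\<dots> = fmv n G (\<lambda>i. \<delta> * fmv n Z' (h e) i)"
          unfolding h_def by (intro fmv_cong) (auto simp: res2)
        also have "\<dots> = (\<lambda>i. \<delta> * fmv n G (fmv n Z' (h e)) i)" by (rule fmv_scale)
        finally have "fdot n (fmv n Z (w e)) (\<lambda>i. g e i - h e i) = \<delta> * fdot n (fmv n Z (w e)) (fmv n G (fmv n Z' (h e)))"
          by (simp add: fdot_scale_right)
        also have "\<dots> = \<delta> * fqf n Z' (h e)"
          unfolding fqf_def h_def fsym_dot[OF G_sym] by (simp add: fdot_comm)
        finally show "fdot n (fmv n Z (w e)) (\<lambda>i. g e i - h e i) = \<delta> * fqf n Z' (h e)" .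
      qed
      finally show ?thesis .
    qed
    moreover have "(\<Sum>e\<in>E. \<delta> * fqf n Z' (h e)) \<ge> 0"
      using finv_psd[OF N' Z'] d by (simp add: sum_nonneg)
    ultimately show ?thesis using r0 by linarith
  qed
  show "T Z' - T Z > 0" using DL rpos d by simp
  have dp: "\<delta> * p \<le> 1" using dT unfolding p_def .
  have "\<delta> * r^2 \<le> m"
  proof -
    have "\<delta> * r^2 \<le> \<delta> * (p * m)" using CS d by simp
    also have "\<dots> = (\<delta> * p) * m" by simp
    also have "\<dots> \<le> 1 * m" using dp m0 by (intro mult_right_mono) auto
    finally show ?thesis by simp
  qed
  then have mr: "m / r \<ge> \<delta> * r" using rpos by (simp add: field_simps power2_eq_square)
  have "s2 / (T Z' - T Z) = 1 / \<delta> + m / r"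
    unfolding DL using s2r rpos d by (simp add: field_simps)
  moreover have "T Z' = p + \<delta> * r" using DL unfolding p_def by simp
  ultimately show "(\<Sum>e\<in>E. fqf n G (fmv n Z' (w e))) / (T Z' - T Z) - T Z' \<ge> 1 / \<delta> - T Z"
    using mr unfolding s2_def p_def by linarith
qed


lemma T_r1: "T (\<lambda>i j. Y i j - c * y i * y j) = T Y - c * fqf n G y"
proof -
  have "T (\<lambda>i j. Y i j - c * y i * y j) = (\<Sum>f\<in>E. fdot n (w f) (fmv n Y (w f)) - c * (fdot n (w f) y)^2)"
    unfolding T_def fmv_r1m
  proof (intro sum.cong refl)
    fix f
    have "fdot n (w f) (\<lambda>i. fmv n Y (w f) i - c * y i * fdot n y (w f)) =
          fdot n (w f) (fmv n Y (w f)) - (c * fdot n y (w f)) * fdot n (w f) y"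
    proof -
      have "(\<lambda>i. fmv n Y (w f) i - c * y i * fdot n y (w f)) = (\<lambda>i. fmv n Y (w f) i - (c * fdot n y (w f)) * y i)"
        by (simp add: algebra_simps)
      then show ?thesis by (simp only: fdot_diff_right fdot_scale_right)
    qed
    then show "fdot n (w f) (\<lambda>i. fmv n Y (w f) i - c * y i * fdot n y (w f)) =
          fdot n (w f) (fmv n Y (w f)) - c * (fdot n (w f) y)^2"
      by (simp add: fdot_comm power2_eq_square)
  qed
  also have "\<dots> = T Y - c * fqf n G y"
    unfolding T_def G_qf by (simp add: sum_subtractf sum_distrib_left)
  finally show ?thesis .
qed

lemma Am_upd: assumes "e \<in> E"
  shows "Am (s(e := s e + t)) = (\<lambda>i j. Am s i j + t * w e i * w e j)"
proof (intro ext)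
  fix i j
  have "Am (s(e := s e + t)) i j = (\<Sum>f\<in>E. s f * w f i * w f j + (if f = e then t * w e i * w e j else 0))"
    unfolding Am_def by (intro sum.cong refl) (auto simp: algebra_simps)
  also have "\<dots> = Am s i j + t * w e i * w e j"
    unfolding Am_def sum.distrib using assms finE by simp
  finally show "Am (s(e := s e + t)) i j = Am s i j + t * w e i * w e j" .
qed

lemma step:
  assumes s0: "\<forall>e. s e \<ge> 0" and sk: "card {e\<in>E. s e \<noteq> 0} \<le> k"
    and Mpd: "fpd n (Mu u s)" and Npd: "fpd n (Nl l s)"
    and TM: "T (minv (Mu u s)) \<le> eU" and TN: "T (minv (Nl l s)) \<le> eL"
    and dU: "dU > 0" and dL: "dL > 0" and dLeL: "dL * eL < 1" and gap: "1 / dU + eU < 1 / dL - eL"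
    and nd: "\<exists>e\<in>E. \<exists>i<n. w e i \<noteq> 0"
  shows "\<exists>s'. (\<forall>e. s' e \<ge> 0) \<and> card {e\<in>E. s' e \<noteq> 0} \<le> Suc k
     \<and> fpd n (Mu (u + dU) s') \<and> fpd n (Nl (l + dL) s')
     \<and> T (minv (Mu (u + dU) s')) \<le> eU \<and> T (minv (Nl (l + dL) s')) \<le> eL"
proof -
  define M where "M = Mu u s"
  define Y where "Y = minv M"
  have Y: "finv n M Y" unfolding Y_def M_def by (rule minv_finv[OF Mpd])
  have M'eq: "Mu (u + dU) s = (\<lambda>i j. M i j + dU * G i j)"
    unfolding M_def Mu_def by (auto simp: algebra_simps)
  have M'pd: "fpd n (\<lambda>i j. M i j + dU * G i j)"
    unfolding fpd_def
  proof (intro conjI allI impI)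
    show "fsym n (\<lambda>i j. M i j + dU * G i j)" using fpd_sym[OF Mpd] G_sym unfolding M_def fsym_def by simp
    fix x :: "nat \<Rightarrow> real" assume "\<exists>i<n. x i \<noteq> 0"
    then have "fqf n M x > 0" using Mpd unfolding M_def fpd_def by auto
    moreover have "dU * fqf n G x \<ge> 0" using dU G_qf_nonneg by simp
    ultimately show "fqf n (\<lambda>i j. M i j + dU * G i j) x > 0" by (simp add: fqf_add_mat fqf_scale_mat)
  qed
  define Y' where "Y' = minv (\<lambda>i j. M i j + dU * G i j)"
  have Y': "finv n (\<lambda>i j. M i j + dU * G i j) Y'" unfolding Y'_def by (rule minv_finv[OF M'pd])
  define N where "N = Nl l s"
  define Z where "Z = minv N"
  have Z: "finv n N Z" unfolding Z_def N_def by (rule minv_finv[OF Npd])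
  have N'eq: "Nl (l + dL) s = (\<lambda>i j. N i j + (-dL) * G i j)"
    unfolding N_def Nl_def by (auto simp: algebra_simps)
  have TZ: "T Z \<le> eL" using TN unfolding Z_def N_def .
  have dTZ: "dL * T Z < 1"
  proof -
    have "dL * T Z \<le> dL * eL" using TZ dL by simp
    then show ?thesis using dLeL by simp
  qed
  have N'pd: "fpd n (\<lambda>i j. N i j + (-dL) * G i j)"
    by (rule barrier_pd[OF Npd[folded N_def] Z]) (use dL dTZ in auto)
  define Z' where "Z' = minv (\<lambda>i j. N i j + (-dL) * G i j)"
  have Z': "finv n (\<lambda>i j. N i j + (-dL) * G i j) Z'" unfolding Z'_def by (rule minv_finv[OF N'pd])
  define DU where "DU = T Y - T Y'"
  define DL where "DL = T Z' - T Z"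
  have US: "dU * (\<Sum>e\<in>E. fqf n G (fmv n Y' (w e))) \<le> DU" and DUpos: "DU > 0"
    using upper_sums[OF Mpd[folded M_def] Y dU M'pd Y'] nd unfolding DU_def by auto
  have DLpos: "DL > 0" and LS: "(\<Sum>e\<in>E. fqf n G (fmv n Z' (w e))) / DL - T Z' \<ge> 1 / dL - T Z"
    using lower_sums[OF Npd[folded N_def] Z dL N'pd Z'] dTZ nd unfolding DL_def by auto
  define U where "U e = fqf n G (fmv n Y' (w e)) / DU + fdot n (w e) (fmv n Y' (w e))" for e
  define L where "L e = fqf n G (fmv n Z' (w e)) / DL - fdot n (w e) (fmv n Z' (w e))" for e
  have TY: "T Y \<le> eU" using TM unfolding Y_def M_def .
  have sumU: "(\<Sum>e\<in>E. U e) < (\<Sum>e\<in>E. L e)"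
  proof -
    have "(\<Sum>e\<in>E. U e) = (\<Sum>e\<in>E. fqf n G (fmv n Y' (w e))) / DU + T Y'"
      unfolding U_def T_def by (simp add: sum.distrib sum_divide_distrib)
    also have "(\<Sum>e\<in>E. fqf n G (fmv n Y' (w e))) / DU \<le> 1 / dU"
      using US DUpos dU by (simp add: field_simps mult.commute)
    also have "T Y' \<le> eU" using DUpos TY unfolding DU_def by simp
    finally have a: "(\<Sum>e\<in>E. U e) \<le> 1 / dU + eU" by simp
    have "(\<Sum>e\<in>E. L e) = (\<Sum>e\<in>E. fqf n G (fmv n Z' (w e))) / DL - T Z'"
      unfolding L_def T_def by (simp add: sum_subtractf sum_divide_distrib)
    then have b: "(\<Sum>e\<in>E. L e) \<ge> 1 / dL - eL" using LS TZ by linarith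
    show ?thesis using a b gap by linarith
  qed
  obtain e where e: "e \<in> E" and ULe: "U e < L e"
  proof (rule ccontr)
    assume "\<not> thesis"
    then have "\<forall>e\<in>E. L e \<le> U e" using that by force
    then have "(\<Sum>e\<in>E. L e) \<le> (\<Sum>e\<in>E. U e)" by (intro sum_mono) auto
    then show False using sumU by simp
  qed
  define a where "a = fdot n (w e) (fmv n Y' (w e))"
  define b where "b = fqf n G (fmv n Y' (w e))"
  define a' where "a' = fdot n (w e) (fmv n Z' (w e))"
  define b' where "b' = fqf n G (fmv n Z' (w e))"
  have a0: "a \<ge> 0" unfolding a_def using finv_psd[OF M'pd Y'] unfolding fqf_def .
  have a'0: "a' \<ge> 0" unfolding a'_def using finv_psd[OF N'pd Z'] unfolding fqf_def .
  have b0: "b \<ge> 0" unfolding b_def by (rule G_qf_nonneg)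
  have b'0: "b' \<ge> 0" unfolding b'_def by (rule G_qf_nonneg)
  have Ue: "U e = b / DU + a" unfolding U_def a_def b_def ..
  have Le: "L e = b' / DL - a'" unfolding L_def a'_def b'_def ..
  have U0: "U e \<ge> 0" using Ue a0 b0 DUpos by simp
  define t where "t = 2 / (U e + L e)"
  have t0: "t > 0" unfolding t_def using U0 ULe by simp
  have tU: "t * U e < 1" unfolding t_def using U0 ULe by (simp add: field_simps)
  have tL: "t * L e > 1" unfolding t_def using U0 ULe by (simp add: field_simps)
  define s' where "s' = s(e := s e + t)"
  have Am': "Am s' = (\<lambda>i j. Am s i j + t * w e i * w e j)" unfolding s'_def by (rule Am_upd[OF e])
  have Mu': "Mu (u + dU) s' = (\<lambda>i j. (\<lambda>i j. M i j + dU * G i j) i j + (-t) * w e i * w e j)"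
    unfolding Mu_def Am' M_def by (auto simp: algebra_simps)
  have ta: "t * a < 1"
  proof -
    have "a \<le> U e" using Ue b0 DUpos by simp
    then have "t * a \<le> t * U e" using t0 by simp
    then show ?thesis using tU by simp
  qed
  have c1: "1 + (-t) * fdot n (w e) (fmv n Y' (w e)) > 0" using ta unfolding a_def by simp
  note R1 = rank1[OF M'pd Y' c1]
  have Mpd2: "fpd n (Mu (u + dU) s')" unfolding Mu' by (rule R1(1))
  have TM2: "T (minv (Mu (u + dU) s')) = T Y' + (t / (1 - t * a)) * b"
    unfolding Mu' T_minv[OF R1(1) R1(2)] T_r1 a_def b_def by simp
  have "(t / (1 - t * a)) * b \<le> DU"
  proof -
    have "t * b / DU + t * a < 1" using tU Ue by (simp add: algebra_simps)
    then have "t * b < DU * (1 - t * a)" using DUpos by (simp add: field_simps)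
    then show ?thesis using ta by (simp add: field_simps)
  qed
  then have TM2': "T (minv (Mu (u + dU) s')) \<le> eU" using TM2 TY unfolding DU_def by simp
  have Nl': "Nl (l + dL) s' = (\<lambda>i j. (\<lambda>i j. N i j + (-dL) * G i j) i j + t * w e i * w e j)"
    unfolding Nl_def Am' N_def by (auto simp: algebra_simps)
  have "t * a' \<ge> 0" using t0 a'0 by simp
  then have c2: "1 + t * fdot n (w e) (fmv n Z' (w e)) > 0" unfolding a'_def by simp
  note R2 = rank1[OF N'pd Z' c2]
  have Npd2: "fpd n (Nl (l + dL) s')" unfolding Nl' by (rule R2(1))
  have TN2: "T (minv (Nl (l + dL) s')) = T Z' - (t / (1 + t * a')) * b'"
    unfolding Nl' T_minv[OF R2(1) R2(2)] T_r1 a'_def b'_def by simp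
  have "DL \<le> (t / (1 + t * a')) * b'"
  proof -
    have "t * b' / DL - t * a' > 1" using tL Le by (simp add: algebra_simps)
    then have "t * b' > DL * (1 + t * a')" using DLpos by (simp add: field_simps)
    moreover have "1 + t * a' > 0" using c2 unfolding a'_def .
    ultimately show ?thesis by (simp add: field_simps)
  qed
  then have TN2': "T (minv (Nl (l + dL) s')) \<le> eL" using TN2 TZ unfolding DL_def by simp
  have "{f\<in>E. s' f \<noteq> 0} \<subseteq> insert e {f\<in>E. s f \<noteq> 0}" unfolding s'_def by auto
  then have "card {f\<in>E. s' f \<noteq> 0} \<le> card (insert e {f\<in>E. s f \<noteq> 0})"
    by (intro card_mono) (use finE in auto)
  also have "\<dots> \<le> Suc (card {f\<in>E. s f \<noteq> 0})" by (rule card_insert_le_m1) (use finE in auto)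
  finally have card': "card {f\<in>E. s' f \<noteq> 0} \<le> Suc k" using sk by simp
  have s'0: "\<forall>f. s' f \<ge> 0" unfolding s'_def using s0 t0 by (auto intro: add_nonneg_nonneg less_imp_le)
  show ?thesis using s'0 card' Mpd2 Npd2 TM2' TN2' by blast
qed


lemma T_entries: "T Y = (\<Sum>i<n. \<Sum>j<n. G i j * Y i j)"
proof -
  have "T Y = (\<Sum>e\<in>E. \<Sum>i<n. \<Sum>j<n. w e i * Y i j * w e j)"
    unfolding T_def fdot_def fmv_def by (simp add: sum_distrib_left mult.assoc)
  also have "\<dots> = (\<Sum>i<n. \<Sum>e\<in>E. \<Sum>j<n. w e i * Y i j * w e j)" by (rule sum.swap)
  also have "\<dots> = (\<Sum>i<n. \<Sum>j<n. \<Sum>e\<in>E. w e i * Y i j * w e j)" by (simp add: sum.swap[of _ E])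
  also have "\<dots> = (\<Sum>i<n. \<Sum>j<n. G i j * Y i j)"
    unfolding G_def by (simp add: sum_distrib_right sum_distrib_left algebra_simps)
  finally show ?thesis .
qed

lemma init:
  assumes GP: "fpd n (\<lambda>i j. G i j + Pm i j)" and c: "c \<ge> 1"
  shows "fpd n (\<lambda>i j. c * G i j + Pm i j)" and "c * T (minv (\<lambda>i j. c * G i j + Pm i j)) \<le> n"
proof -
  let ?Mc = "\<lambda>i j. c * G i j + Pm i j"
  show pd: "fpd n ?Mc" unfolding fpd_def
  proof (intro conjI allI impI)
    show "fsym n ?Mc" using G_sym Pm_sym unfolding fsym_def by simp
    fix x :: "nat \<Rightarrow> real" assume "\<exists>i<n. x i \<noteq> 0"
    then have "fqf n (\<lambda>i j. G i j + Pm i j) x > 0" using GP unfolding fpd_def by auto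
    moreover have "(c - 1) * fqf n G x \<ge> 0" using c G_qf_nonneg by simp
    ultimately show "fqf n ?Mc x > 0" by (simp add: fqf_add_mat fqf_scale_mat algebra_simps)
  qed
  define Y where "Y = minv ?Mc"
  have Y: "finv n ?Mc Y" unfolding Y_def by (rule minv_finv[OF pd])
  have Ys: "fsym n Y" using Y by (rule finv_sym)
  define d where "d i = (\<lambda>k. if k = i then 1 else (0::real))" for i :: nat
  have Yd: "fmv n Y (d i) = (\<lambda>j. Y j i)" if "i < n" for i
    unfolding fmv_def d_def using that by (simp add: sum_delta_r)
  have row: "(\<Sum>j<n. ?Mc i j * Y i j) = 1" if i: "i < n" for i
  proof -
    have "(\<Sum>j<n. ?Mc i j * Y i j) = (\<Sum>j<n. ?Mc i j * Y j i)"
      using Ys i unfolding fsym_def by (intro sum.cong refl) auto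
    also have "\<dots> = fmv n ?Mc (\<lambda>j. Y j i) i" by (simp add: fmv_def)
    also have "\<dots> = fmv n ?Mc (fmv n Y (d i)) i" using Yd[OF i] by simp
    also have "\<dots> = d i i" by (rule finv_MY[OF Y i])
    finally show ?thesis unfolding d_def by simp
  qed
  have diag: "Y i i \<ge> 0" if i: "i < n" for i
  proof -
    have "fqf n Y (d i) = fdot n (d i) (\<lambda>j. Y j i)" unfolding fqf_def Yd[OF i] ..
    also have "\<dots> = Y i i" unfolding fdot_def d_def using i by (simp add: sum_delta_l)
    finally have "fqf n Y (d i) = Y i i" .
    then show ?thesis using finv_psd[OF pd Y, of "d i"] by simp
  qed
  have "c * T Y = (\<Sum>i<n. \<Sum>j<n. ?Mc i j * Y i j) - (\<Sum>i<n. \<Sum>j<n. Pm i j * Y i j)"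
    unfolding T_entries by (simp add: sum_distrib_left sum_subtractf[symmetric] algebra_simps)
  moreover have "(\<Sum>i<n. \<Sum>j<n. ?Mc i j * Y i j) = n" using row by simp
  moreover have "(\<Sum>i<n. \<Sum>j<n. Pm i j * Y i j) \<ge> 0"
  proof (rule sum_nonneg)
    fix i assume "i \<in> {..<n}"
    then have i: "i < n" by simp
    have "(\<Sum>j<n. Pm i j * Y i j) = (\<Sum>j<n. if j = i then (if i \<in> J then Y i j else 0) else 0)"
      unfolding Pm_def by (intro sum.cong) auto
    also have "\<dots> = (if i \<in> J then Y i i else 0)" using i by simp
    finally show "(\<Sum>j<n. Pm i j * Y i j) \<ge> 0" using diag[OF i] by simp
  qed
  ultimately show "c * T (minv ?Mc) \<le> n" unfolding Y_def by simp
qed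

lemma Am0: "Am (\<lambda>_. 0) = (\<lambda>i j. 0)" unfolding Am_def by simp

lemma iterate:
  assumes dU: "dU > 0" and dL: "dL > 0" and dLeL: "dL * eL < 1" and gap: "1 / dU + eU < 1 / dL - eL"
    and nd: "\<exists>e\<in>E. \<exists>i<n. w e i \<noteq> 0"
    and I1: "fpd n (Mu u0 (\<lambda>_. 0))" and I2: "fpd n (Nl l0 (\<lambda>_. 0))"
    and I3: "T (minv (Mu u0 (\<lambda>_. 0))) \<le> eU" and I4: "T (minv (Nl l0 (\<lambda>_. 0))) \<le> eL"
  shows "\<exists>s. (\<forall>e. s e \<ge> 0) \<and> card {e\<in>E. s e \<noteq> 0} \<le> k
     \<and> fpd n (Mu (u0 + real k * dU) s) \<and> fpd n (Nl (l0 + real k * dL) s)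
     \<and> T (minv (Mu (u0 + real k * dU) s)) \<le> eU \<and> T (minv (Nl (l0 + real k * dL) s)) \<le> eL"
proof (induction k)
  case 0
  show ?case by (rule exI[of _ "\<lambda>_. 0"]) (use I1 I2 I3 I4 in simp)
next
  case (Suc k)
  then obtain s where s: "\<forall>e. s e \<ge> 0" "card {e\<in>E. s e \<noteq> 0} \<le> k"
    "fpd n (Mu (u0 + real k * dU) s)" "fpd n (Nl (l0 + real k * dL) s)"
    "T (minv (Mu (u0 + real k * dU) s)) \<le> eU" "T (minv (Nl (l0 + real k * dL) s)) \<le> eL" by blast
  have e1: "u0 + real (Suc k) * dU = (u0 + real k * dU) + dU" by (simp add: algebra_simps)
  have e2: "l0 + real (Suc k) * dL = (l0 + real k * dL) + dL" by (simp add: algebra_simps)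
  show ?case unfolding e1 e2 by (rule step[OF s dU dL dLeL gap nd])
qed

lemma Mu0: "Mu u (\<lambda>_. 0) = (\<lambda>i j. u * G i j + Pm i j)" unfolding Mu_def Am0 by simp
lemma Nl0: "Nl l (\<lambda>_. 0) = (\<lambda>i j. (-l) * G i j + Pm i j)" unfolding Nl_def Am0 by simp

lemma qf_Mu: "fqf n (Mu u s) x = u * fqf n G x - fqf n (Am s) x + fqf n Pm x"
  unfolding Mu_def by (simp add: fqf_add_mat fqf_diff_mat fqf_scale_mat)
lemma qf_Nl: "fqf n (Nl l s) x = fqf n (Am s) x - l * fqf n G x + fqf n Pm x"
  unfolding Nl_def by (simp add: fqf_add_mat fqf_diff_mat fqf_scale_mat)


lemma core:
  assumes GP: "fpd n (\<lambda>i j. G i j + Pm i j)" and e0: "0 < \<epsilon>" and e1: "\<epsilon> < 1"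
  shows "\<exists>s. (\<forall>e. s e \<ge> 0) \<and> card {e\<in>E. s e \<noteq> 0} \<le> nat \<lceil>12 / \<epsilon>^2\<rceil> * n \<and>
     (\<forall>x. (\<forall>j\<in>J. x j = 0) \<longrightarrow> (1 - \<epsilon>) * fqf n G x \<le> fqf n (Am s) x \<and> fqf n (Am s) x \<le> (1 + \<epsilon>) * fqf n G x)"
proof (cases "\<exists>e\<in>E. \<exists>i<n. w e i \<noteq> 0")
  case False
  have "fqf n G x = 0" for x unfolding G_qf using False by (simp add: fdot_zero_on)
  moreover have "fqf n (Am (\<lambda>_. 0)) x = 0" for x unfolding Am_qf by simp
  ultimately show ?thesis by (intro exI[of _ "\<lambda>_. 0"]) simp
next
  case True
  note nd = True
  then have n1: "real n \<ge> 1" by auto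
  define g where "g = \<epsilon> / 6"
  define m where "m = nat \<lceil>12 / \<epsilon>^2\<rceil>"
  define K where "K = m * n"
  define u0 where "u0 = real n / g"
  have g0: "g > 0" "g < 1" unfolding g_def using e0 e1 by auto
  have u01: "u0 \<ge> 1" unfolding u0_def using g0 n1 by (simp add: field_simps)
  have dU: "1 / (1 - 3 * g) > 0" unfolding g_def using e1 by simp
  have dLeL: "1 * g < 1" using g0 by simp
  have gap: "1 / (1 / (1 - 3 * g)) + g < 1 / 1 - g" using g0 by simp
  have I1: "fpd n (Mu u0 (\<lambda>_. 0))" unfolding Mu0 by (rule init(1)[OF GP u01])
  have I2: "fpd n (Nl (- u0) (\<lambda>_. 0))" unfolding Nl0 using init(1)[OF GP u01] by simp
  have I3: "T (minv (Mu u0 (\<lambda>_. 0))) \<le> g"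
  proof -
    have "u0 * T (minv (Mu u0 (\<lambda>_. 0))) \<le> n" unfolding Mu0 by (rule init(2)[OF GP u01])
    then show ?thesis unfolding u0_def using g0 n1 by (simp add: field_simps)
  qed
  have I4: "T (minv (Nl (- u0) (\<lambda>_. 0))) \<le> g"
  proof -
    have "u0 * T (minv (Nl (- u0) (\<lambda>_. 0))) \<le> n" unfolding Nl0 using init(2)[OF GP u01] by simp
    then show ?thesis unfolding u0_def using g0 n1 by (simp add: field_simps)
  qed
  obtain s where s: "\<forall>e. s e \<ge> 0" "card {e\<in>E. s e \<noteq> 0} \<le> K"
    "fpd n (Mu (u0 + real K * (1 / (1 - 3 * g))) s)" "fpd n (Nl (- u0 + real K * 1) s)"
    using iterate[OF dU _ dLeL gap nd I1 I2 I3 I4, of K] by auto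
  define u where "u = u0 + real K * (1 / (1 - 3 * g))"
  define l where "l = - u0 + real K * 1"
  have Kb: "real K \<ge> 12 * real n / \<epsilon>^2"
  proof -
    have "real m \<ge> 12 / \<epsilon>^2" unfolding m_def by linarith
    then have "real m * real n \<ge> 12 / \<epsilon>^2 * real n" using n1 by (intro mult_right_mono) auto
    then show ?thesis unfolding K_def by simp
  qed
  note PA = param_arith[OF e0 e1 n1 Kb]
  have ueq: "u = real n / (\<epsilon>/6) + real K * (1 / (1 - 3 * (\<epsilon>/6)))" unfolding u_def u0_def g_def ..
  have leq: "l = - real n / (\<epsilon>/6) + real K * 1" unfolding l_def u0_def g_def by simp
  have lpos: "l > 0" and ul: "u \<ge> l" and r1: "2 * l / (l + u) \<ge> 1 - \<epsilon>" and r2: "2 * u / (l + u) \<le> 1 + \<epsilon>"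
    using PA unfolding ueq[symmetric] leq[symmetric] by auto
  define c where "c = 2 / (l + u)"
  have c0: "c > 0" unfolding c_def using lpos ul by simp
  define s' where "s' e = c * s e" for e
  have qA: "fqf n (Am s') x = c * fqf n (Am s) x" for x
    unfolding Am_qf s'_def by (simp add: sum_distrib_left mult.assoc)
  have bounds: "(1 - \<epsilon>) * fqf n G x \<le> fqf n (Am s') x \<and> fqf n (Am s') x \<le> (1 + \<epsilon>) * fqf n G x"
    if x: "\<forall>j\<in>J. x j = 0" for x
  proof -
    have qP: "fqf n Pm x = 0" unfolding Pm_qf using x by simp
    have "fqf n (Nl l s) x \<ge> 0" using fpd_psd[OF s(4)[folded l_def]] .
    then have lo: "l * fqf n G x \<le> fqf n (Am s) x" unfolding qf_Nl qP by simp
    have "fqf n (Mu u s) x \<ge> 0" using fpd_psd[OF s(3)[folded u_def]] .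
    then have hi: "fqf n (Am s) x \<le> u * fqf n G x" unfolding qf_Mu qP by simp
    have qG: "fqf n G x \<ge> 0" by (rule G_qf_nonneg)
    have "(1 - \<epsilon>) * fqf n G x \<le> (2 * l / (l + u)) * fqf n G x" using r1 qG by (rule mult_right_mono)
    also have "\<dots> = c * (l * fqf n G x)" unfolding c_def by simp
    also have "\<dots> \<le> c * fqf n (Am s) x" using lo c0 by simp
    finally have A: "(1 - \<epsilon>) * fqf n G x \<le> fqf n (Am s') x" unfolding qA .
    have "c * fqf n (Am s) x \<le> c * (u * fqf n G x)" using hi c0 by simp
    also have "\<dots> = (2 * u / (l + u)) * fqf n G x" unfolding c_def by simp
    also have "\<dots> \<le> (1 + \<epsilon>) * fqf n G x" using r2 qG by (rule mult_right_mono)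
    finally have B: "fqf n (Am s') x \<le> (1 + \<epsilon>) * fqf n G x" unfolding qA .
    show ?thesis using A B by simp
  qed
  have "{e\<in>E. s' e \<noteq> 0} = {e\<in>E. s e \<noteq> 0}" unfolding s'_def using c0 by auto
  then have card': "card {e\<in>E. s' e \<noteq> 0} \<le> m * n" using s(2) unfolding K_def by simp
  have "\<forall>e. s' e \<ge> 0" unfolding s'_def using s(1) c0 by simp
  then show ?thesis using card' bounds unfolding m_def by blast
qed

end


lemma not_fpd: assumes "fsym n M" "\<not> fpd n M" shows "\<exists>x. (\<exists>i<n. x i \<noteq> 0) \<and> fqf n M x \<le> 0"
  using assms unfolding fpd_def by (auto simp: not_less)

lemma Jred_aux:
  assumes finE: "finite E"
  shows "J \<subseteq> {..<n} \<Longrightarrow> card ({..<n} - J) \<le> k \<Longrightarrow>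
    (\<forall>x. \<exists>x'. (\<forall>j\<in>J. x' j = 0) \<and> (\<forall>e\<in>E. fdot n (w e) x' = fdot n (w e) x)) \<Longrightarrow>
    \<exists>J'. J' \<subseteq> {..<n} \<and> fpd n (\<lambda>i j. (\<Sum>e\<in>E. w e i * w e j) + (if i = j \<and> i \<in> J' then 1 else 0)) \<and>
       (\<forall>x. \<exists>x'. (\<forall>j\<in>J'. x' j = 0) \<and> (\<forall>e\<in>E. fdot n (w e) x' = fdot n (w e) x))"
proof (induction k arbitrary: J)
  case (0 J)
  show ?case
  proof (rule ccontr)
    assume na: "\<not> ?case"
    interpret B: bss n E w J by unfold_locales (use finE 0 in auto)
    have sym: "fsym n (\<lambda>i j. B.G i j + B.Pm i j)" using B.G_sym B.Pm_sym unfolding fsym_def by simp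
    have "\<not> fpd n (\<lambda>i j. B.G i j + B.Pm i j)" using na 0 unfolding B.G_def B.Pm_def by blast
    then obtain x i where x: "i < n" "x i \<noteq> 0" "fqf n (\<lambda>i j. B.G i j + B.Pm i j) x \<le> 0"
      using not_fpd[OF sym] by blast
    have "(\<Sum>j\<in>J. (x j)^2) = 0"
    proof -
      have "fqf n (\<lambda>i j. B.G i j + B.Pm i j) x = fqf n B.G x + (\<Sum>j\<in>J. (x j)^2)"
        by (simp add: fqf_add_mat B.Pm_qf)
      moreover have "(\<Sum>j\<in>J. (x j)^2) \<ge> 0" by (simp add: sum_nonneg)
      ultimately show ?thesis using x(3) B.G_qf_nonneg[of x] by linarith
    qed
    moreover have "finite J" using 0 finite_subset by blast
    ultimately have "\<forall>j\<in>J. x j = 0" by (simp add: sum_nonneg_eq_0_iff)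
    moreover have "i \<in> J"
    proof -
      have "card ({..<n} - J) = 0" using 0 by simp
      then have "{..<n} - J = {}" by simp
      then show ?thesis using x(1) by auto
    qed
    ultimately show False using x(2) by simp
  qed
next
  case (Suc k J)
  show ?case
  proof (cases "fpd n (\<lambda>i j. (\<Sum>e\<in>E. w e i * w e j) + (if i = j \<and> i \<in> J then 1 else 0))")
    case True then show ?thesis using Suc.prems by blast
  next
    case False
    interpret B: bss n E w J by unfold_locales (use finE Suc.prems in auto)
    have sym: "fsym n (\<lambda>i j. B.G i j + B.Pm i j)" using B.G_sym B.Pm_sym unfolding fsym_def by simp
    have "\<not> fpd n (\<lambda>i j. B.G i j + B.Pm i j)" using False unfolding B.G_def B.Pm_def by blast
    then obtain x i where x: "i < n" "x i \<noteq> 0" "fqf n (\<lambda>i j. B.G i j + B.Pm i j) x \<le> 0"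
      using not_fpd[OF sym] by blast
    have eq: "fqf n (\<lambda>i j. B.G i j + B.Pm i j) x = (\<Sum>e\<in>E. (fdot n (w e) x)^2) + (\<Sum>j\<in>J. (x j)^2)"
      by (simp add: fqf_add_mat B.Pm_qf B.G_qf)
    have s1: "(\<Sum>e\<in>E. (fdot n (w e) x)^2) \<ge> 0" "(\<Sum>j\<in>J. (x j)^2) \<ge> 0" by (simp_all add: sum_nonneg)
    have "finite J" using Suc.prems finite_subset by blast
    have "(\<Sum>j\<in>J. (x j)^2) = 0" using eq s1 x(3) by linarith
    then have xJ: "\<forall>j\<in>J. x j = 0" using \<open>finite J\<close> by (simp add: sum_nonneg_eq_0_iff)
    have "(\<Sum>e\<in>E. (fdot n (w e) x)^2) = 0" using eq s1 x(3) by linarith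
    then have xE: "\<forall>e\<in>E. fdot n (w e) x = 0" using finE by (simp add: sum_nonneg_eq_0_iff)
    have iJ: "i \<notin> J" using xJ x(2) by auto
    define J1 where "J1 = insert i J"
    have J1n: "J1 \<subseteq> {..<n}" unfolding J1_def using x(1) Suc.prems by auto
    have "card ({..<n} - J1) = card ({..<n} - J) - 1"
    proof -
      have "{..<n} - J1 = ({..<n} - J) - {i}" unfolding J1_def by auto
      moreover have "i \<in> {..<n} - J" using x(1) iJ by auto
      ultimately show ?thesis by (simp add: card_Diff_singleton)
    qed
    then have c1: "card ({..<n} - J1) \<le> k" using Suc.prems(2) by simp
    have inv1: "\<forall>y. \<exists>y'. (\<forall>j\<in>J1. y' j = 0) \<and> (\<forall>e\<in>E. fdot n (w e) y' = fdot n (w e) y)"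
    proof
      fix y
      obtain y' where y': "\<forall>j\<in>J. y' j = 0" "\<forall>e\<in>E. fdot n (w e) y' = fdot n (w e) y"
        using Suc.prems(3) by blast
      define y'' where "y'' = (\<lambda>j. y' j - (y' i / x i) * x j)"
      have "\<forall>j\<in>J1. y'' j = 0" unfolding y''_def J1_def using y'(1) xJ x(2) by auto
      moreover have "\<forall>e\<in>E. fdot n (w e) y'' = fdot n (w e) y"
        unfolding y''_def fdot_diff_right fdot_scale_right using xE y'(2) by simp
      ultimately show "\<exists>y'. (\<forall>j\<in>J1. y' j = 0) \<and> (\<forall>e\<in>E. fdot n (w e) y' = fdot n (w e) y)" by blast
    qed
    show ?thesis using Suc.IH[OF J1n c1 inv1] .
  qed
qed

lemma bss_full:
  assumes finE: "finite E" and e0: "0 < \<epsilon>" and e1: "\<epsilon> < 1"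
  shows "\<exists>s. (\<forall>e. s e \<ge> 0) \<and> card {e\<in>E. s e \<noteq> 0} \<le> nat \<lceil>12 / \<epsilon>^2\<rceil> * n \<and>
     (\<forall>x. (1 - \<epsilon>) * (\<Sum>e\<in>E. (fdot n (w e) x)^2) \<le> (\<Sum>e\<in>E. s e * (fdot n (w e) x)^2) \<and>
          (\<Sum>e\<in>E. s e * (fdot n (w e) x)^2) \<le> (1 + \<epsilon>) * (\<Sum>e\<in>E. (fdot n (w e) x)^2))"
proof -
  obtain J where J: "J \<subseteq> {..<n}" "fpd n (\<lambda>i j. (\<Sum>e\<in>E. w e i * w e j) + (if i = j \<and> i \<in> J then 1 else 0))"
    "\<forall>x. \<exists>x'. (\<forall>j\<in>J. x' j = 0) \<and> (\<forall>e\<in>E. fdot n (w e) x' = fdot n (w e) x)"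
  proof -
    have "\<forall>x. \<exists>x'. (\<forall>j\<in>{}. x' j = 0) \<and> (\<forall>e\<in>E. fdot n (w e) x' = fdot n (w e) x)" by blast
    then show ?thesis using Jred_aux[OF finE, of "{}" n n w] that by auto
  qed
  interpret B: bss n E w J by unfold_locales (use finE J in auto)
  have GP: "fpd n (\<lambda>i j. B.G i j + B.Pm i j)" using J(2) unfolding B.G_def B.Pm_def .
  obtain s where s: "\<forall>e. s e \<ge> 0" "card {e\<in>E. s e \<noteq> 0} \<le> nat \<lceil>12 / \<epsilon>^2\<rceil> * n"
    "\<forall>x. (\<forall>j\<in>J. x j = 0) \<longrightarrow> (1 - \<epsilon>) * fqf n B.G x \<le> fqf n (B.Am s) x \<and> fqf n (B.Am s) x \<le> (1 + \<epsilon>) * fqf n B.G x"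
    using B.core[OF GP e0 e1] by blast
  have bnd: "(1 - \<epsilon>) * (\<Sum>e\<in>E. (fdot n (w e) x)^2) \<le> (\<Sum>e\<in>E. s e * (fdot n (w e) x)^2) \<and>
          (\<Sum>e\<in>E. s e * (fdot n (w e) x)^2) \<le> (1 + \<epsilon>) * (\<Sum>e\<in>E. (fdot n (w e) x)^2)" for x
  proof -
    obtain x' where x': "\<forall>j\<in>J. x' j = 0" "\<forall>e\<in>E. fdot n (w e) x' = fdot n (w e) x" using J(3) by blast
    have 1: "fqf n B.G x' = (\<Sum>e\<in>E. (fdot n (w e) x)^2)" unfolding B.G_qf using x'(2) by simp
    have 2: "fqf n (B.Am s) x' = (\<Sum>e\<in>E. s e * (fdot n (w e) x)^2)" unfolding B.Am_qf using x'(2) by simp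
    show ?thesis using s(3) x'(1) 1 2 by metis
  qed
  show ?thesis using s(1) s(2) bnd by blast
qed



definition Kz :: "('d \<Rightarrow> 'd \<Rightarrow> bool) \<Rightarrow> 'd set \<Rightarrow> 'd \<Rightarrow> 'd set" where
  "Kz P D a = {b\<in>D. \<not> P a b}"
definition Fam :: "('d \<Rightarrow> 'd \<Rightarrow> bool) \<Rightarrow> 'd set \<Rightarrow> 'd set set" where
  "Fam P D = {Kz P D a | a. a \<in> D \<and> Kz P D a \<noteq> {}}"
definition ind :: "bool \<Rightarrow> real" where "ind b = (if b then 1 else 0)"

lemma ind_sq[simp]: "(ind b)^2 = ind b" unfolding ind_def by simp

lemma Fam_finite: "finite D \<Longrightarrow> finite (Fam P D)"
proof -
  assume "finite D"
  have "Fam P D \<subseteq> Pow D" unfolding Fam_def Kz_def by auto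
  then show ?thesis using \<open>finite D\<close> by (rule finite_subset[OF _ finite_Pow_iff[THEN iffD2]])
qed

lemma Fam_disj:
  assumes sing: "\<And>B C. B \<subseteq> D \<Longrightarrow> C \<subseteq> D \<Longrightarrow> card B = 2 \<Longrightarrow> card C = 2 \<Longrightarrow> \<not> restriction_singleton P B C"
    and X: "X \<in> Fam P D" and Y: "Y \<in> Fam P D" and b: "b \<in> X" "b \<in> Y"
  shows "X = Y"
proof (rule ccontr)
  assume XY: "X \<noteq> Y"
  obtain a1 where a1: "a1 \<in> D" "X = Kz P D a1" using X unfolding Fam_def by auto
  obtain a2 where a2: "a2 \<in> D" "Y = Kz P D a2" using Y unfolding Fam_def by auto
  have gen: False if a1: "a1 \<in> D" "X = Kz P D a1" and a2: "a2 \<in> D" "Y = Kz P D a2"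
     and b: "b \<in> X" "b \<in> Y" and c: "c \<in> X" "c \<notin> Y" for X Y a1 a2 c
  proof -
    have a12: "a1 \<noteq> a2" using a1 a2 c by auto
    have bc: "b \<noteq> c" using b c by auto
    have bD: "b \<in> D" "c \<in> D" using b c a1 unfolding Kz_def by auto
    have P: "\<not> P a1 b" "\<not> P a1 c" "\<not> P a2 b" "P a2 c"
      using a1 a2 b c bD unfolding Kz_def by auto
    have "{(x,y) \<in> {a1,a2} \<times> {b,c}. P x y} = {(a2,c)}" using P by auto
    then have "restriction_singleton P {a1,a2} {b,c}" unfolding restriction_singleton_def by simp
    moreover have "card {a1,a2} = 2" "card {b,c} = 2" using a12 bc by auto
    ultimately show False using sing[of "{a1,a2}" "{b,c}"] a1 a2 bD by auto
  qed
  from XY have "(\<exists>c. c \<in> X \<and> c \<notin> Y) \<or> (\<exists>c. c \<in> Y \<and> c \<notin> X)" by blast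
  then show False
  proof
    assume "\<exists>c. c \<in> X \<and> c \<notin> Y"
    then obtain c where "c \<in> X" "c \<notin> Y" by blast
    then show False using gen[OF a1 a2 b] by blast
  next
    assume "\<exists>c. c \<in> Y \<and> c \<notin> X"
    then obtain c where "c \<in> Y" "c \<notin> X" by blast
    then show False using gen[OF a2 a1 b(2) b(1)] by blast
  qed
qed

lemma sum_ind_disj:
  assumes fin: "finite F'" and disj: "\<And>X Y. X \<in> F' \<Longrightarrow> Y \<in> F' \<Longrightarrow> b \<in> X \<Longrightarrow> b \<in> Y \<Longrightarrow> X = Y"
  shows "(\<Sum>X\<in>F'. ind (b \<in> X)) = ind (b \<in> \<Union>F')"
proof (cases "b \<in> \<Union>F'")
  case False
  then show ?thesis unfolding ind_def by auto
next
  case True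
  then obtain X1 where X1: "X1 \<in> F'" "b \<in> X1" by auto
  have "(\<Sum>X\<in>F'. ind (b \<in> X)) = (\<Sum>X\<in>F'. if X = X1 then 1 else 0)"
    unfolding ind_def using disj X1 by (intro sum.cong refl) auto
  also have "\<dots> = 1" using X1 fin by simp
  finally show ?thesis using True unfolding ind_def by simp
qed

definition fk :: "('d \<Rightarrow> 'd \<Rightarrow> bool) \<Rightarrow> 'd set \<Rightarrow> 'd set option option \<Rightarrow> 'd \<Rightarrow> real" where
  "fk P D k a = (case k of None \<Rightarrow> ind (Kz P D a = {}) | Some None \<Rightarrow> 0 | Some (Some X) \<Rightarrow> ind (Kz P D a = X))"
definition gk :: "('d \<Rightarrow> 'd \<Rightarrow> bool) \<Rightarrow> 'd set \<Rightarrow> 'd set option option \<Rightarrow> 'd \<Rightarrow> real" where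
  "gk P D k b = (case k of None \<Rightarrow> 0 | Some None \<Rightarrow> ind (b \<notin> \<Union>(Fam P D)) | Some (Some X) \<Rightarrow> ind (b \<in> X))"
definition Kidx :: "('d \<Rightarrow> 'd \<Rightarrow> bool) \<Rightarrow> 'd set \<Rightarrow> 'd set option option set" where
  "Kidx P D = insert None (insert (Some None) (Some ` Some ` Fam P D))"

lemma Kidx_finite: "finite D \<Longrightarrow> finite (Kidx P D)"
  unfolding Kidx_def using Fam_finite by blast

lemma decomp:
  assumes finD: "finite D"
    and sing: "\<And>B C. B \<subseteq> D \<Longrightarrow> C \<subseteq> D \<Longrightarrow> card B = 2 \<Longrightarrow> card C = 2 \<Longrightarrow> \<not> restriction_singleton P B C"
    and a: "a \<in> D" and b: "b \<in> D"
  shows "2 * ind (P a b) = (\<Sum>k\<in>Kidx P D. (fk P D k a - gk P D k b)^2)"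
proof -
  let ?F = "Fam P D"
  have finF: "finite ?F" by (rule Fam_finite[OF finD])
  have disj: "\<And>X Y. X \<in> ?F \<Longrightarrow> Y \<in> ?F \<Longrightarrow> b \<in> X \<Longrightarrow> b \<in> Y \<Longrightarrow> X = Y"
    using Fam_disj[OF sing] by blast
  have inj: "inj_on (\<lambda>X. Some (Some X)) ?F" by (auto intro: inj_onI)
  have split: "(\<Sum>k\<in>Kidx P D. (fk P D k a - gk P D k b)^2) =
      (ind (Kz P D a = {})) + ind (b \<notin> \<Union>?F) + (\<Sum>X\<in>?F. (ind (Kz P D a = X) - ind (b \<in> X))^2)"
  proof -
    have "(\<Sum>k\<in>Kidx P D. (fk P D k a - gk P D k b)^2) =
        (fk P D None a - gk P D None b)^2 + ((fk P D (Some None) a - gk P D (Some None) b)^2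
         + (\<Sum>k\<in>Some ` Some ` ?F. (fk P D k a - gk P D k b)^2))"
      unfolding Kidx_def using finF by (simp add: sum.insert image_iff)
    also have "(\<Sum>k\<in>Some ` Some ` ?F. (fk P D k a - gk P D k b)^2) = (\<Sum>X\<in>?F. (ind (Kz P D a = X) - ind (b \<in> X))^2)"
    proof -
      have "Some ` Some ` ?F = (\<lambda>X. Some (Some X)) ` ?F" by auto
      then have "(\<Sum>k\<in>Some ` Some ` ?F. (fk P D k a - gk P D k b)^2) = (\<Sum>X\<in>?F. (fk P D (Some (Some X)) a - gk P D (Some (Some X)) b)^2)"
        using sum.reindex[OF inj, of "\<lambda>k. (fk P D k a - gk P D k b)^2"] by simp
      then show ?thesis unfolding fk_def gk_def by simp
    qed
    finally show ?thesis unfolding fk_def gk_def by simp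
  qed
  show ?thesis
  proof (cases "Kz P D a = {}")
    case True
    then have Pab: "P a b" using b unfolding Kz_def by auto
    have "(\<Sum>X\<in>?F. (ind (Kz P D a = X) - ind (b \<in> X))^2) = (\<Sum>X\<in>?F. ind (b \<in> X))"
    proof (intro sum.cong refl)
      fix X assume "X \<in> ?F"
      then have "X \<noteq> {}" unfolding Fam_def by auto
      then show "(ind (Kz P D a = X) - ind (b \<in> X))^2 = ind (b \<in> X)" using True unfolding ind_def by auto
    qed
    also have "\<dots> = ind (b \<in> \<Union>?F)" by (rule sum_ind_disj[OF finF disj])
    finally show ?thesis unfolding split using True Pab unfolding ind_def by auto
  next
    case False
    define X0 where "X0 = Kz P D a"
    have X0F: "X0 \<in> ?F" unfolding X0_def Fam_def using a False by auto
    have "(\<Sum>X\<in>?F. (ind (Kz P D a = X) - ind (b \<in> X))^2) =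
        (ind (Kz P D a = X0) - ind (b \<in> X0))^2 + (\<Sum>X\<in>?F - {X0}. (ind (Kz P D a = X) - ind (b \<in> X))^2)"
      using X0F finF by (simp add: sum.remove)
    also have "(\<Sum>X\<in>?F - {X0}. (ind (Kz P D a = X) - ind (b \<in> X))^2) = (\<Sum>X\<in>?F - {X0}. ind (b \<in> X))"
      unfolding X0_def ind_def by (intro sum.cong refl) auto
    also have "\<dots> = ind (b \<in> \<Union>(?F - {X0}))" using finF disj by (intro sum_ind_disj) auto
    finally have S: "(\<Sum>X\<in>?F. (ind (Kz P D a = X) - ind (b \<in> X))^2) = ind (b \<notin> X0) + ind (b \<in> \<Union>(?F - {X0}))"
      unfolding X0_def ind_def by simp
    show ?thesis
    proof (cases "b \<in> X0")
      case True
      then have "\<not> P a b" unfolding X0_def Kz_def by auto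
      moreover have "b \<notin> \<Union>(?F - {X0})" using disj True X0F by blast
      moreover have "b \<in> \<Union>?F" using True X0F by blast
      ultimately show ?thesis unfolding split S using False True unfolding ind_def by simp
    next
      case bX0: False
      then have "P a b" unfolding X0_def Kz_def using b by auto
      moreover have "(b \<in> \<Union>(?F - {X0})) = (b \<in> \<Union>?F)" using bX0 by blast
      ultimately show ?thesis unfolding split S using False bX0 unfolding ind_def by simp
    qed
  qed
qed



lemma fdot_pair:
  assumes "a < n" "b < n"
  shows "fdot n (\<lambda>i. r * ((if i = a then 1 else 0) - (if i = b then 1 else 0))) x = r * (x a - x b)"
proof -
  have "fdot n (\<lambda>i. r * ((if i = a then 1 else 0) - (if i = b then 1 else 0))) x
      = (\<Sum>i<n. (if i = a then r * x i else 0) - (if i = b then r * x i else 0))"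
    unfolding fdot_def by (intro sum.cong refl) auto
  also have "\<dots> = r * x a - r * x b" using assms by (simp add: sum_subtractf)
  finally show ?thesis by (simp add: algebra_simps)
qed

lemma main:
  fixes D :: "'d set" and P :: "'d \<Rightarrow> 'd \<Rightarrow> bool" and V :: "'v set"
  assumes finD: "finite D"
    and sing: "\<And>B C. B \<subseteq> D \<Longrightarrow> C \<subseteq> D \<Longrightarrow> card B = 2 \<Longrightarrow> card C = 2 \<Longrightarrow> \<not> restriction_singleton P B C"
    and e0: "0 < \<epsilon>" and e1: "\<epsilon> < 1" and inst: "csp_instance V Cs w"
  shows "\<exists>Pie we. is_sparsifier P D V Cs w \<epsilon> Pie we \<and> real (card Pie) \<le> 26 * real (card V) / \<epsilon>^2"
proof -
  have finV: "finite V" and PiV: "Cs \<subseteq> V \<times> V" and wpos: "\<And>c. c \<in> Cs \<Longrightarrow> w c > 0"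
    using inst unfolding csp_instance_def by auto
  have finPi: "finite Cs" using finite_subset[OF PiV] finV by blast
  define S where "S = V \<times> (UNIV :: bool set)"
  define N where "N = card S"
  have finS: "finite S" unfolding S_def using finV by simp
  have NV: "N = 2 * card V" unfolding N_def S_def by (simp add: card_cartesian_product)
  obtain idx where bij: "bij_betw idx S {0..<N}" using ex_bij_betw_finite_nat[OF finS] unfolding N_def by blast
  have idxN: "idx p < N" if "p \<in> S" for p using bij that unfolding bij_betw_def by auto
  have inj: "inj_on idx S" using bij unfolding bij_betw_def by auto
  define wv where "wv c = (\<lambda>i. sqrt (w c) * ((if i = idx (fst c, True) then 1 else 0) - (if i = idx (snd c, False) then 1 else 0)))" for c
  obtain s where s0: "\<forall>c. s c \<ge> 0" and scard: "card {c\<in>Cs. s c \<noteq> 0} \<le> nat \<lceil>12 / \<epsilon>^2\<rceil> * N"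
    and sb: "\<forall>x. (1 - \<epsilon>) * (\<Sum>c\<in>Cs. (fdot N (wv c) x)^2) \<le> (\<Sum>c\<in>Cs. s c * (fdot N (wv c) x)^2) \<and>
          (\<Sum>c\<in>Cs. s c * (fdot N (wv c) x)^2) \<le> (1 + \<epsilon>) * (\<Sum>c\<in>Cs. (fdot N (wv c) x)^2)"
    using bss_full[OF finPi e0 e1, of N wv] by blast
  define Pie where "Pie = {c\<in>Cs. s c \<noteq> 0}"
  define we where "we c = s c * w c" for c
  have sub: "Pie \<subseteq> Cs" unfolding Pie_def by auto
  have wepos: "\<forall>c\<in>Pie. we c > 0"
  proof
    fix c assume c: "c \<in> Pie"
    have "s c \<ge> 0" using s0 by blast
    then have "s c > 0" using c unfolding Pie_def by (auto simp: less_le)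
    moreover have "w c > 0" using c wpos unfolding Pie_def by auto
    ultimately show "we c > 0" unfolding we_def by simp
  qed
  have bounds: "(1 - \<epsilon>) * csp_val P Cs w A \<le> csp_val P Pie we A \<and> csp_val P Pie we A \<le> (1 + \<epsilon>) * csp_val P Cs w A"
    if A: "\<forall>x\<in>V. A x \<in> D" for A
  proof -
    let ?K = "Kidx P D"
    define h where "h k c = (fk P D k (A (fst c)) - gk P D k (A (snd c)))^2" for k c
    define Qw where "Qw k = (\<Sum>c\<in>Cs. w c * h k c)" for k
    define Qs where "Qs k = (\<Sum>c\<in>Cs. s c * (w c * h k c))" for k
    have cD: "A (fst c) \<in> D" "A (snd c) \<in> D" if "c \<in> Cs" for c using that PiV A by auto
    have dec: "ind (P (A (fst c)) (A (snd c))) = (1/2) * (\<Sum>k\<in>?K. h k c)" if "c \<in> Cs" for c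
    proof -
      have "2 * ind (P (A (fst c)) (A (snd c))) = (\<Sum>k\<in>?K. h k c)"
        using decomp[OF finD sing cD[OF that]] unfolding h_def .
      then show ?thesis by linarith
    qed
    have Qb: "(1 - \<epsilon>) * Qw k \<le> Qs k \<and> Qs k \<le> (1 + \<epsilon>) * Qw k" for k
    proof -
      define xk where "xk = (\<lambda>i. (\<lambda>p. if snd p then fk P D k (A (fst p)) else gk P D k (A (fst p))) (inv_into S idx i))"
      have fd: "(fdot N (wv c) xk)^2 = w c * h k c" if c: "c \<in> Cs" for c
      proof -
        have in1: "(fst c, True) \<in> S" "(snd c, False) \<in> S" unfolding S_def using c PiV by auto
        have "fdot N (wv c) xk = sqrt (w c) * (xk (idx (fst c, True)) - xk (idx (snd c, False)))"
          unfolding wv_def by (rule fdot_pair[OF idxN[OF in1(1)] idxN[OF in1(2)]])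
        also have "xk (idx (fst c, True)) = fk P D k (A (fst c))"
          unfolding xk_def using inv_into_f_f[OF inj in1(1)] by simp
        also have "xk (idx (snd c, False)) = gk P D k (A (snd c))"
          unfolding xk_def using inv_into_f_f[OF inj in1(2)] by simp
        finally have "fdot N (wv c) xk = sqrt (w c) * (fk P D k (A (fst c)) - gk P D k (A (snd c)))" .
        then have "(fdot N (wv c) xk)^2 = (sqrt (w c))^2 * (fk P D k (A (fst c)) - gk P D k (A (snd c)))^2"
          by (simp only: power_mult_distrib)
        also have "(sqrt (w c))^2 = w c" using wpos[OF c] by simp
        finally show ?thesis unfolding h_def .
      qed
      have 1: "(\<Sum>c\<in>Cs. (fdot N (wv c) xk)^2) = Qw k" unfolding Qw_def by (intro sum.cong refl fd)
      have 2: "(\<Sum>c\<in>Cs. s c * (fdot N (wv c) xk)^2) = Qs k" unfolding Qs_def using fd by simp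
      show ?thesis using sb[rule_format, of xk] unfolding 1 2 .
    qed
    have V1: "csp_val P Cs w A = (1/2) * (\<Sum>k\<in>?K. Qw k)"
    proof -
      have "csp_val P Cs w A = (\<Sum>c\<in>Cs. w c * ((1/2) * (\<Sum>k\<in>?K. h k c)))"
        unfolding csp_val_def using dec unfolding ind_def by (intro sum.cong refl) simp
      also have "\<dots> = (1/2) * (\<Sum>c\<in>Cs. \<Sum>k\<in>?K. w c * h k c)"
        by (simp add: sum_distrib_left algebra_simps)
      also have "\<dots> = (1/2) * (\<Sum>k\<in>?K. \<Sum>c\<in>Cs. w c * h k c)"
        by (subst sum.swap) (rule refl)
      also have "\<dots> = (1/2) * (\<Sum>k\<in>?K. Qw k)" unfolding Qw_def ..
      finally show ?thesis .
    qed
    have V2: "csp_val P Pie we A = (1/2) * (\<Sum>k\<in>?K. Qs k)"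
    proof -
      have "csp_val P Pie we A = (\<Sum>c\<in>Cs. s c * w c * (if P (A (fst c)) (A (snd c)) then 1 else 0))"
        unfolding csp_val_def we_def Pie_def
        by (rule sum.mono_neutral_left) (use finPi in auto)
      also have "\<dots> = (\<Sum>c\<in>Cs. s c * w c * ((1/2) * (\<Sum>k\<in>?K. h k c)))"
        using dec unfolding ind_def by (intro sum.cong refl) simp
      also have "\<dots> = (1/2) * (\<Sum>c\<in>Cs. \<Sum>k\<in>?K. s c * (w c * h k c))"
        by (simp add: sum_distrib_left algebra_simps)
      also have "\<dots> = (1/2) * (\<Sum>k\<in>?K. \<Sum>c\<in>Cs. s c * (w c * h k c))"
        by (subst sum.swap) (rule refl)
      also have "\<dots> = (1/2) * (\<Sum>k\<in>?K. Qs k)" unfolding Qs_def ..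
      finally show ?thesis .
    qed
    have "(1 - \<epsilon>) * (\<Sum>k\<in>?K. Qw k) \<le> (\<Sum>k\<in>?K. Qs k)"
      unfolding sum_distrib_left using Qb by (intro sum_mono) auto
    moreover have "(\<Sum>k\<in>?K. Qs k) \<le> (1 + \<epsilon>) * (\<Sum>k\<in>?K. Qw k)"
      unfolding sum_distrib_left using Qb by (intro sum_mono) auto
    ultimately show ?thesis unfolding V1 V2 by (simp add: algebra_simps)
  qed
  have spars: "is_sparsifier P D V Cs w \<epsilon> Pie we"
    unfolding is_sparsifier_def using sub wepos bounds by blast
  have "real (card Pie) \<le> real (nat \<lceil>12 / \<epsilon>^2\<rceil>) * real N"
    using scard unfolding Pie_def by (metis of_nat_le_iff of_nat_mult)
  also have "real (nat \<lceil>12 / \<epsilon>^2\<rceil>) \<le> 13 / \<epsilon>^2"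
  proof -
    have "1 \<le> 1 / \<epsilon>^2" using e0 e1 by (simp add: field_simps power_le_one)
    moreover have "real (nat \<lceil>12 / \<epsilon>^2\<rceil>) \<le> 12 / \<epsilon>^2 + 1"
      using e0 by (simp add: of_nat_nat)
    ultimately show ?thesis by (simp add: field_simps)
  qed
  finally have "real (card Pie) \<le> 13 / \<epsilon>^2 * real N" by (simp add: mult_right_mono)
  then have "real (card Pie) \<le> 26 * real (card V) / \<epsilon>^2" unfolding NV by simp
  then show ?thesis using spars by blast
qed


theorem theorem8:
  fixes D :: "'d set" and P :: "'d \<Rightarrow> 'd \<Rightarrow> bool"
  assumes "finite D"
    and "\<And>B C. B \<subseteq> D \<Longrightarrow> C \<subseteq> D \<Longrightarrow> card B = 2 \<Longrightarrow> card C = 2 \<Longrightarrow>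
            \<not> restriction_singleton P B C"
  shows "\<exists>K::real. \<forall>\<epsilon>::real. \<forall>(V :: 'v set) Pi w.
           0 < \<epsilon> \<and> \<epsilon> < 1 \<and> csp_instance V Pi w \<longrightarrow>
           (\<exists>Pie we. is_sparsifier P D V Pi w \<epsilon> Pie we \<and>
                     real (card Pie) \<le> K * real (card V) / \<epsilon>^2)"
  proof -
  show ?thesis
  proof (rule exI[of _ 26], intro allI impI)
    fix \<epsilon> :: real and V :: "'v set" and Cs w
    assume h: "0 < \<epsilon> \<and> \<epsilon> < 1 \<and> csp_instance V Cs w"
    show "\<exists>Pie we. is_sparsifier P D V Cs w \<epsilon> Pie we \<and> real (card Pie) \<le> 26 * real (card V) / \<epsilon>^2"
      using main[OF assms(1) assms(2)] h by blast
  qed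
qed

end
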